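(* Let $G=(G'_\ell,A'_\ell,B'_\ell)\circ(G'_{\ell-1},A'_{\ell-1},B'_{\ell-1})\circ\cdots\circ(G'_1,A'_1,B'_1)\circ G'_0$ be the compact canonical decomposition of a graph $G$. Then every automorphism $\pi$ of $G$ satisfies $\pi(V(G'_i))=V(G'_i)$ for every $i=0,\dots,\ell$, and the map $\pi\mapsto(\pi|_{V(G'_\ell)},\dots,\pi|_{V(G'_0)})$ is a group isomorphism $$\mathrm{Aut}(G)\cong\mathrm{Aut}(G'_\ell)\times\mathrm{Aut}(G'_{\ell-1})\times\cdots\times\mathrm{Aut}(G'_1)\times\mathrm{Aut}(G'_0);$$ in particular, any choice of automorphisms $\pi_i\in\mathrm{Aut}(G'_i)$ combines into an automorphism of $G$.
   Context: All graphs are finite and simple; $\mathrm{Aut}(G)$ is the group of automorphisms (adjacency-preserving bijections $V(G)\to V(G)$). A graph is split if its vertex set can be partitioned into $A$ (inducing a complete graph) and $B$ (inducing an independent set), either possibly empty; $(A,B)$ is a $KS$-partition. For split $(G,A,B)$ with $V(G)\neq\emptyset$ and a graph $H$, $V(H)\neq\emptyset$, on disjoint vertices, $(G,A,B)\circ H$ is the graph on $V(G)\cup V(H)$ with edge set $E(G)\cup E(H)\cup\{uv:u\in A,v\in V(H)\}$; this is associative and iterated compositions are read right-nested. A graph is indecomposable if it is not isomorphic to any such composition. Canonical decomposition (Tyshkevich): every graph is $G=(G_k,A_k,B_k)\circ\cdots\circ(G_1,A_1,B_1)\circ G_0$ with every $G_i$ indecomposable, unique up to componentwise isomorphism. A single-vertex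 component $(G_i,A_i,B_i)$, $i\ge1$, has type $K_1$ if $A_i=V(G_i)$ and type $S_1$ if $B_i=V(G_i)$; if $G_0$ and $G_1$ are both single-vertex graphs, $G_0$ is assigned the type of $G_1$. The compact canonical decomposition is obtained from the canonical decomposition by replacing each maximal run of consecutive single-vertex components of the same type by a single component: a run of $m$ components of type $K_1$ is replaced by the complete graph $K_m$ with $KS$-partition $(V(K_m),\emptyset)$, and a run of $m$ components of type $S_1$ by the edgeless graph on $m$ vertices with $KS$-partition $(\emptyset,\text{all vertices})$ (if the run contains $G_0$, the replacement becomes the new last component $G'_0$). It is unique up to isomorphism, and each component is an indecomposable graph with at least two vertices, a complete graph, or an edgeless graph. *)

theory Defs
  imports "HOL-Algebra.Product_Groups"
begin

type_synonym 'a graph = "'a set \<times> 'a set set"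

definition verts :: "'a graph \<Rightarrow> 'a set" where "verts G = fst G"
definition edges :: "'a graph \<Rightarrow> 'a set set" where "edges G = snd G"
definition adj :: "'a graph \<Rightarrow> 'a \<Rightarrow> 'a \<Rightarrow> bool" where "adj G u v \<longleftrightarrow> {u, v} \<in> edges G"

definition is_graph :: "'a graph \<Rightarrow> bool" where
  "is_graph G \<longleftrightarrow> finite (verts G) \<and>
     (\<forall>e\<in>edges G. \<exists>u v. e = {u, v} \<and> u \<noteq> v \<and> u \<in> verts G \<and> v \<in> verts G)"

definition complete_graph :: "'a set \<Rightarrow> 'a graph" where
  "complete_graph U = (U, {{u, v} | u v. u \<in> U \<and> v \<in> U \<and> u \<noteq> v})"

definition edgeless_graph :: "'a set \<Rightarrow> 'a graph" where
  "edgeless_graph U = (U, {})"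

text \<open>Automorphisms are represented as permutations of the vertex set that fix every
  non-vertex (so that they form a group under composition).\<close>
definition Aut :: "'a graph \<Rightarrow> ('a \<Rightarrow> 'a) set" where
  "Aut G = {\<pi>. bij_betw \<pi> (verts G) (verts G) \<and> (\<forall>x. x \<notin> verts G \<longrightarrow> \<pi> x = x) \<and>
              (\<forall>u\<in>verts G. \<forall>v\<in>verts G. adj G u v \<longleftrightarrow> adj G (\<pi> u) (\<pi> v))}"

definition Aut_group :: "'a graph \<Rightarrow> ('a \<Rightarrow> 'a) monoid" where
  "Aut_group G = \<lparr>carrier = Aut G, monoid.mult = (\<circ>), one = id\<rparr>"

definition perm_restrict :: "('a \<Rightarrow> 'a) \<Rightarrow> 'a set \<Rightarrow> ('a \<Rightarrow> 'a)" where
  "perm_restrict \<pi> S = (\<lambda>x. if x \<in> S then \<pi> x else x)"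

definition isomorphic :: "'a graph \<Rightarrow> 'b graph \<Rightarrow> bool" where
  "isomorphic G H \<longleftrightarrow> (\<exists>f. bij_betw f (verts G) (verts H) \<and>
      (\<forall>u\<in>verts G. \<forall>v\<in>verts G. adj G u v \<longleftrightarrow> adj H (f u) (f v)))"

definition KS_partition :: "'a graph \<Rightarrow> 'a set \<Rightarrow> 'a set \<Rightarrow> bool" where
  "KS_partition G A B \<longleftrightarrow> A \<union> B = verts G \<and> A \<inter> B = {} \<and>
     (\<forall>u\<in>A. \<forall>v\<in>A. u \<noteq> v \<longrightarrow> adj G u v) \<and> (\<forall>u\<in>B. \<forall>v\<in>B. \<not> adj G u v)"

definition comp_split :: "'a graph \<times> 'a set \<times> 'a set \<Rightarrow> 'a graph \<Rightarrow> 'a graph" where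
  "comp_split GAB H = (case GAB of (G, A, B) \<Rightarrow>
     (verts G \<union> verts H, edges G \<union> edges H \<union> {{u, v} | u v. u \<in> A \<and> v \<in> verts H}))"

definition valid_comp :: "'a graph \<Rightarrow> 'a set \<Rightarrow> 'a set \<Rightarrow> 'a graph \<Rightarrow> bool" where
  "valid_comp G A B H \<longleftrightarrow> is_graph G \<and> is_graph H \<and> KS_partition G A B \<and>
     verts G \<noteq> {} \<and> verts H \<noteq> {} \<and> verts G \<inter> verts H = {}"

definition indecomposable :: "'a graph \<Rightarrow> bool" where
  "indecomposable G \<longleftrightarrow>
     \<not> (\<exists>(G1 :: 'a graph) A B H. valid_comp G1 A B H \<and> isomorphic G (comp_split (G1, A, B) H))"

primrec compose :: "nat \<Rightarrow> (nat \<Rightarrow> 'a graph) \<Rightarrow> (nat \<Rightarrow> 'a set) \<Rightarrow> (nat \<Rightarrow> 'a set) \<Rightarrow> 'a graph" where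
  "compose 0 Gs As Bs = Gs 0"
| "compose (Suc i) Gs As Bs = comp_split (Gs (Suc i), As (Suc i), Bs (Suc i)) (compose i Gs As Bs)"

definition canonical_decomp ::
  "'a graph \<Rightarrow> nat \<Rightarrow> (nat \<Rightarrow> 'a graph) \<Rightarrow> (nat \<Rightarrow> 'a set) \<Rightarrow> (nat \<Rightarrow> 'a set) \<Rightarrow> bool" where
  "canonical_decomp G k Gs As Bs \<longleftrightarrow>
     G = compose k Gs As Bs \<and>
     (\<forall>i\<le>k. is_graph (Gs i) \<and> verts (Gs i) \<noteq> {} \<and> indecomposable (Gs i)) \<and>
     (\<forall>i\<in>{1..k}. KS_partition (Gs i) (As i) (Bs i)) \<and>
     (\<forall>i\<le>k. \<forall>j\<le>k. i \<noteq> j \<longrightarrow> verts (Gs i) \<inter> verts (Gs j) = {})"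

datatype sv_type = TK1 | TS1

definition comp_type ::
  "nat \<Rightarrow> (nat \<Rightarrow> 'a graph) \<Rightarrow> (nat \<Rightarrow> 'a set) \<Rightarrow> nat \<Rightarrow> sv_type option" where
  "comp_type k Gs As i =
     (if 1 \<le> i \<and> i \<le> k \<and> card (verts (Gs i)) = 1 then
        Some (if As i = verts (Gs i) then TK1 else TS1)
      else if i = 0 \<and> 1 \<le> k \<and> card (verts (Gs 0)) = 1 \<and> card (verts (Gs 1)) = 1 then
        Some (if As 1 = verts (Gs 1) then TK1 else TS1)
      else None)"

text \<open>The components (G'_j, A'_j, B'_j), j = 0..l, arise from the canonical decomposition
  (Gs i, As i, Bs i), i = 0..k, by replacing each maximal run of consecutive typed
  single-vertex components of the same type by one complete / edgeless component.
  The map f sends an old index to the index of the new component containing it.\<close>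
definition compact_of ::
  "nat \<Rightarrow> (nat \<Rightarrow> 'a graph) \<Rightarrow> (nat \<Rightarrow> 'a set) \<Rightarrow> (nat \<Rightarrow> 'a set) \<Rightarrow>
   nat \<Rightarrow> (nat \<Rightarrow> 'a graph) \<Rightarrow> (nat \<Rightarrow> 'a set) \<Rightarrow> (nat \<Rightarrow> 'a set) \<Rightarrow> bool" where
  "compact_of k Gs As Bs l G' A' B' \<longleftrightarrow>
    (\<exists>f :: nat \<Rightarrow> nat.
       f 0 = 0 \<and> mono_on {0..k} f \<and> f ` {0..k} = {0..l} \<and>
       (\<forall>i<k. f i = f (Suc i) \<longleftrightarrow>
                 (comp_type k Gs As i \<noteq> None \<and> comp_type k Gs As i = comp_type k Gs As (Suc i))) \<and>
       (\<forall>i\<le>k. comp_type k Gs As i = None \<longrightarrow>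
            G' (f i) = Gs i \<and> (1 \<le> f i \<longrightarrow> A' (f i) = As i \<and> B' (f i) = Bs i)) \<and>
       (\<forall>i\<le>k. let U = \<Union>{verts (Gs i') | i'. i' \<le> k \<and> f i' = f i} in
            (comp_type k Gs As i = Some TK1 \<longrightarrow>
               G' (f i) = complete_graph U \<and> (1 \<le> f i \<longrightarrow> A' (f i) = U \<and> B' (f i) = {})) \<and>
            (comp_type k Gs As i = Some TS1 \<longrightarrow>
               G' (f i) = edgeless_graph U \<and> (1 \<le> f i \<longrightarrow> A' (f i) = {} \<and> B' (f i) = U))))"

definition compact_canonical_decomp ::
  "'a graph \<Rightarrow> nat \<Rightarrow> (nat \<Rightarrow> 'a graph) \<Rightarrow> (nat \<Rightarrow> 'a set) \<Rightarrow> (nat \<Rightarrow> 'a set) \<Rightarrow> bool" where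
  "compact_canonical_decomp G l G' A' B' \<longleftrightarrow>
     (\<exists>k Gs As Bs. canonical_decomp G k Gs As Bs \<and> compact_of k Gs As Bs l G' A' B')"

end

theory Submission
  imports Defs
begin



lemma adj_sym: "adj G u v = adj G v u"
  by (simp add: adj_def insert_commute)

lemma adj_irrefl: "is_graph G \<Longrightarrow> \<not> adj G u u"
  unfolding is_graph_def adj_def by (auto simp: doubleton_eq_iff)

lemma adj_in_verts: "is_graph G \<Longrightarrow> adj G u v \<Longrightarrow> u \<in> verts G \<and> v \<in> verts G"
  unfolding is_graph_def adj_def by (fastforce simp: doubleton_eq_iff)

definition induced :: "'a graph \<Rightarrow> 'a set \<Rightarrow> 'a graph" where
  "induced G S = (S, {e \<in> edges G. e \<subseteq> S})"

lemma verts_induced[simp]: "verts (induced G S) = S"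
  by (simp add: induced_def verts_def)

lemma adj_induced: "u \<in> S \<Longrightarrow> v \<in> S \<Longrightarrow> adj (induced G S) u v = adj G u v"
  by (simp add: induced_def adj_def edges_def)

lemma is_graph_induced: "is_graph G \<Longrightarrow> S \<subseteq> verts G \<Longrightarrow> is_graph (induced G S)"
  unfolding is_graph_def induced_def verts_def edges_def
  by (auto intro: finite_subset) (metis insert_subset)+

lemma decomp:
  assumes g: "is_graph H" and Y: "Y \<subseteq> verts H" "Y \<noteq> {}" and X: "verts H - Y \<noteq> {}"
    and AB: "A \<union> B = verts H - Y" "A \<inter> B = {}"
    and cA: "\<forall>u\<in>A. \<forall>v\<in>A. u \<noteq> v \<longrightarrow> adj H u v"
    and iB: "\<forall>u\<in>B. \<forall>v\<in>B. \<not> adj H u v"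
    and cAY: "\<forall>a\<in>A. \<forall>y\<in>Y. adj H a y"
    and iBY: "\<forall>b\<in>B. \<forall>y\<in>Y. \<not> adj H b y"
  shows "\<not> indecomposable H"
proof -
  define X where "X = verts H - Y"
  let ?G1 = "induced H X" and ?H = "induced H Y"
  have AX: "A \<subseteq> X" "B \<subseteq> X" using AB X_def by auto
  have v: "valid_comp ?G1 A B ?H"
    unfolding valid_comp_def KS_partition_def using g Y X AB
  proof (intro conjI)
    show "\<forall>u\<in>A. \<forall>v\<in>A. u \<noteq> v \<longrightarrow> adj ?G1 u v" using cA AX adj_induced[where S=X and G=H] by blast
    show "\<forall>u\<in>B. \<forall>v\<in>B. \<not> adj ?G1 u v" using iB AX adj_induced[where S=X and G=H] by blast
  qed (auto simp: X_def is_graph_induced)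
  have iso: "isomorphic H (comp_split (?G1, A, B) ?H)"
    unfolding isomorphic_def
  proof (intro exI[of _ id] conjI ballI)
    show "bij_betw id (verts H) (verts (comp_split (?G1, A, B) ?H))"
      using Y by (auto simp: comp_split_def verts_def[of "(_, _)"] X_def Un_absorb2 bij_betw_id)
  next
    fix u v assume u: "u \<in> verts H" and v: "v \<in> verts H"
    have e: "adj (comp_split (?G1, A, B) ?H) u v \<longleftrightarrow>
       ({u,v} \<subseteq> X \<and> adj H u v) \<or> ({u,v} \<subseteq> Y \<and> adj H u v) \<or>
       (u \<in> A \<and> v \<in> Y) \<or> (v \<in> A \<and> u \<in> Y)"
      unfolding comp_split_def adj_def
      by (auto simp: edges_def verts_def induced_def doubleton_eq_iff)
      have s1: "\<forall>a\<in>A. \<forall>y\<in>Y. adj H y a" "\<forall>b\<in>B. \<forall>y\<in>Y. \<not> adj H y b"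
        using cAY iBY adj_sym[of H] by blast+
      show "adj H u v = adj (comp_split (?G1, A, B) ?H) (id u) (id v)"
      unfolding id_def e using u v AB cAY iBY X_def s1
      by auto
  qed
  show ?thesis using v iso unfolding indecomposable_def by blast
qed




lemma verts_comp_split: "verts (comp_split (G, A, B) H) = verts G \<union> verts H"
  by (simp add: comp_split_def verts_def)
lemma edges_comp_split: "edges (comp_split (G, A, B) H) =
   edges G \<union> edges H \<union> {{u, v} | u v. u \<in> A \<and> v \<in> verts H}"
  by (simp add: comp_split_def edges_def)

lemma verts_compose: "verts (compose m Gs As Bs) = (\<Union>i\<le>m. verts (Gs i))"
  by (induction m) (auto simp: verts_comp_split le_Suc_eq)

lemma edges_compose: "edges (compose m Gs As Bs) = (\<Union>i\<le>m. edges (Gs i)) \<union>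
   {{u, v} | u v. \<exists>i\<le>m. \<exists>i'<i. u \<in> As i \<and> v \<in> verts (Gs i')}"
proof (induction m)
  case 0 then show ?case by simp
next
  case (Suc m)
  show ?case
  proof -
    have 1: "(\<Union>i\<le>Suc m. edges (Gs i)) = edges (Gs (Suc m)) \<union> (\<Union>i\<le>m. edges (Gs i))"
      by (auto simp: atMost_Suc)
    have 2: "{{u, v} | u v. \<exists>i\<le>Suc m. \<exists>i'<i. u \<in> As i \<and> v \<in> verts (Gs i')} =
      {{u, v} | u v. \<exists>i\<le>m. \<exists>i'<i. u \<in> As i \<and> v \<in> verts (Gs i')} \<union>
      {{u, v} | u v. u \<in> As (Suc m) \<and> v \<in> (\<Union>i\<le>m. verts (Gs i))}"
    proof (intro equalityI subsetI)
      fix e assume "e \<in> {{u, v} | u v. \<exists>i\<le>Suc m. \<exists>i'<i. u \<in> As i \<and> v \<in> verts (Gs i')}"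
      then obtain u v i i' where "e = {u,v}" "i \<le> Suc m" "i' < i" "u \<in> As i" "v \<in> verts (Gs i')" by blast
      then show "e \<in> {{u, v} | u v. \<exists>i\<le>m. \<exists>i'<i. u \<in> As i \<and> v \<in> verts (Gs i')} \<union>
      {{u, v} | u v. u \<in> As (Suc m) \<and> v \<in> (\<Union>i\<le>m. verts (Gs i))}"
      proof (cases "i = Suc m")
        case True
        then show ?thesis using \<open>e = {u,v}\<close> \<open>i' < i\<close> \<open>u \<in> As i\<close> \<open>v \<in> verts (Gs i')\<close> by auto
      next
        case False
        then have "i \<le> m" using \<open>i \<le> Suc m\<close> by simp
        then show ?thesis using \<open>e = {u,v}\<close> \<open>i' < i\<close> \<open>u \<in> As i\<close> \<open>v \<in> verts (Gs i')\<close> by blast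
      qed
    next
      fix e assume "e \<in> {{u, v} | u v. \<exists>i\<le>m. \<exists>i'<i. u \<in> As i \<and> v \<in> verts (Gs i')} \<union>
      {{u, v} | u v. u \<in> As (Suc m) \<and> v \<in> (\<Union>i\<le>m. verts (Gs i))}"
      then show "e \<in> {{u, v} | u v. \<exists>i\<le>Suc m. \<exists>i'<i. u \<in> As i \<and> v \<in> verts (Gs i')}"
      proof
        assume "e \<in> {{u, v} | u v. \<exists>i\<le>m. \<exists>i'<i. u \<in> As i \<and> v \<in> verts (Gs i')}"
        then obtain u v i i' where "e = {u,v}" "i \<le> m" "i' < i" "u \<in> As i" "v \<in> verts (Gs i')" by blast
        then show ?thesis using le_SucI by blast
      next
        assume "e \<in> {{u, v} | u v. u \<in> As (Suc m) \<and> v \<in> (\<Union>i\<le>m. verts (Gs i))}"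
        then obtain u v i' where "e = {u,v}" "i' \<le> m" "u \<in> As (Suc m)" "v \<in> verts (Gs i')" by blast
        then show ?thesis using le_imp_less_Suc by blast
      qed
    qed
    show ?thesis
      unfolding compose.simps edges_comp_split Suc verts_compose 1 2 by blast
  qed
qed

lemma doubleton_mem: "{u,v} \<in> {{a,b} | a b. P a b} \<longleftrightarrow> P u v \<or> P v u"
  by (auto simp: doubleton_eq_iff)

locale cdec =
  fixes K :: nat and Gs :: "nat \<Rightarrow> 'a graph" and As Bs :: "nat \<Rightarrow> 'a set"
  assumes gr: "\<And>i. i \<le> K \<Longrightarrow> is_graph (Gs i)"
  and ne: "\<And>i. i \<le> K \<Longrightarrow> verts (Gs i) \<noteq> {}"
  and indec: "\<And>i. i \<le> K \<Longrightarrow> indecomposable (Gs i)"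
  and ks: "\<And>i. 1 \<le> i \<Longrightarrow> i \<le> K \<Longrightarrow> KS_partition (Gs i) (As i) (Bs i)"
  and disj: "\<And>i j. i \<le> K \<Longrightarrow> j \<le> K \<Longrightarrow> i \<noteq> j \<Longrightarrow> verts (Gs i) \<inter> verts (Gs j) = {}"
begin

abbreviation "V i \<equiv> verts (Gs i)"
definition "T m = (\<Union>i\<le>m. V i)"
abbreviation "GG \<equiv> compose K Gs As Bs"
abbreviation "ct i \<equiv> comp_type K Gs As i"

lemma idx_unique: "x \<in> V i \<Longrightarrow> x \<in> V j \<Longrightarrow> i \<le> K \<Longrightarrow> j \<le> K \<Longrightarrow> i = j"
  using disj by blast

lemma As_sub: "1 \<le> i \<Longrightarrow> i \<le> K \<Longrightarrow> As i \<subseteq> V i"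
  using ks unfolding KS_partition_def by blast
lemma Bs_sub: "1 \<le> i \<Longrightarrow> i \<le> K \<Longrightarrow> Bs i \<subseteq> V i"
  using ks unfolding KS_partition_def by blast

lemma verts_GG: "verts GG = T K"
  by (simp add: verts_compose T_def)

lemma in_edges_comp: "i \<le> K \<Longrightarrow> {u, v} \<in> edges (Gs i) \<Longrightarrow> u \<in> V i \<and> v \<in> V i"
  using adj_in_verts[OF gr] unfolding adj_def by blast

lemma adj_GG:
  assumes u: "u \<in> V i" and v: "v \<in> V j" and i: "i \<le> K" and j: "j \<le> K"
  shows "adj GG u v \<longleftrightarrow> (if i = j then adj (Gs i) u v else if j < i then u \<in> As i else v \<in> As j)"
proof -
  have "adj GG u v \<longleftrightarrow> (\<exists>p\<le>K. {u,v} \<in> edges (Gs p)) \<or>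
      (\<exists>p\<le>K. \<exists>q<p. (u \<in> As p \<and> v \<in> V q) \<or> (v \<in> As p \<and> u \<in> V q))"
    unfolding adj_def edges_compose Un_iff doubleton_mem UN_iff atMost_iff by blast
  also have "\<dots> \<longleftrightarrow> (if i = j then adj (Gs i) u v else if j < i then u \<in> As i else v \<in> As j)"
  proof -
    have 1: "(\<exists>p\<le>K. {u,v} \<in> edges (Gs p)) \<longleftrightarrow> i = j \<and> adj (Gs i) u v"
      using in_edges_comp idx_unique u v i j unfolding adj_def by metis
    have 2: "(\<exists>p\<le>K. \<exists>q<p. (u \<in> As p \<and> v \<in> V q) \<or> (v \<in> As p \<and> u \<in> V q))
       \<longleftrightarrow> (j < i \<and> u \<in> As i) \<or> (i < j \<and> v \<in> As j)"
    proof
      assume "\<exists>p\<le>K. \<exists>q<p. (u \<in> As p \<and> v \<in> V q) \<or> (v \<in> As p \<and> u \<in> V q)"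
      then obtain p q where pq: "p \<le> K" "q < p" "(u \<in> As p \<and> v \<in> V q) \<or> (v \<in> As p \<and> u \<in> V q)" by blast
      then have "As p \<subseteq> V p" using As_sub by simp
      then show "(j < i \<and> u \<in> As i) \<or> (i < j \<and> v \<in> As j)"
      proof (cases "u \<in> As p \<and> v \<in> V q")
        case True
        then have "p = i" "q = j" using pq idx_unique[of u] idx_unique[of v] u v i j \<open>As p \<subseteq> V p\<close> by auto
        then show ?thesis using True pq by simp
      next
        case False
        then have "v \<in> As p" "u \<in> V q" using pq by auto
        then have "p = j" "q = i" using pq idx_unique[of u] idx_unique[of v] u v i j \<open>As p \<subseteq> V p\<close> by auto
        then show ?thesis using \<open>v \<in> As p\<close> pq by simp
      qed
    next
      assume "(j < i \<and> u \<in> As i) \<or> (i < j \<and> v \<in> As j)"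
      then show "\<exists>p\<le>K. \<exists>q<p. (u \<in> As p \<and> v \<in> V q) \<or> (v \<in> As p \<and> u \<in> V q)"
        using u v i j by blast
    qed
    show ?thesis unfolding 1 2 by auto
  qed
  finally show ?thesis .
qed

lemma adj_GG_same: "u \<in> V i \<Longrightarrow> v \<in> V i \<Longrightarrow> i \<le> K \<Longrightarrow> adj GG u v = adj (Gs i) u v"
  using adj_GG by simp

lemma irrefl_GG: "u \<in> T K \<Longrightarrow> \<not> adj GG u u"
  unfolding T_def using adj_GG_same adj_irrefl[OF gr] by auto

end



context cdec begin

lemma dom_within:
  assumes i: "i \<le> K" and x: "x \<in> V i" and d: "\<forall>y\<in>V i. y \<noteq> x \<longrightarrow> adj (Gs i) x y"
  shows "V i = {x}"
proof (rule ccontr)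
  assume "V i \<noteq> {x}"
  then have Y: "V i - {x} \<noteq> {}" using x by auto
  have "\<not> indecomposable (Gs i)"
    by (rule decomp[OF gr[OF i], of "V i - {x}" "{x}" "{}"]) (use x Y d in auto)
  then show False using indec i by blast
qed

lemma isol_within:
  assumes i: "i \<le> K" and x: "x \<in> V i" and d: "\<forall>y\<in>V i. y \<noteq> x \<longrightarrow> \<not> adj (Gs i) x y"
  shows "V i = {x}"
proof (rule ccontr)
  assume "V i \<noteq> {x}"
  then have Y: "V i - {x} \<noteq> {}" using x by auto
  have "\<not> indecomposable (Gs i)"
    by (rule decomp[OF gr[OF i], of "V i - {x}" "{}" "{x}"]) (use x Y d adj_irrefl[OF gr[OF i]] in auto)
  then show False using indec i by blast
qed

lemma ct_pos: "1 \<le> i \<Longrightarrow> i \<le> K \<Longrightarrow>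
   ct i = (if card (V i) = 1 then Some (if As i = V i then TK1 else TS1) else None)"
  by (simp add: comp_type_def)

lemma ct_0: "ct 0 = (if 1 \<le> K \<and> card (V 0) = 1 \<and> card (V 1) = 1
    then Some (if As 1 = V 1 then TK1 else TS1) else None)"
  by (simp add: comp_type_def)

lemma ct_big: "K < i \<Longrightarrow> ct i = None"
  by (simp add: comp_type_def)

lemma T_mono: "i \<le> j \<Longrightarrow> T i \<subseteq> T j"
  unfolding T_def by (intro UN_mono) auto

lemma V_sub_T: "i \<le> j \<Longrightarrow> V i \<subseteq> T j"
  unfolding T_def by auto

lemma in_T: "x \<in> T j \<longleftrightarrow> (\<exists>i\<le>j. x \<in> V i)"
  unfolding T_def by auto

lemma sub_dom:
  assumes n: "1 \<le> n" "n \<le> K" and x: "x \<in> V i" "i < n" and d: "\<forall>v\<in>V n. adj GG x v"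
  shows "As n = V n \<and> card (V n) = 1"
proof -
  have A: "As n = V n"
  proof
    show "As n \<subseteq> V n" using As_sub n by simp
    show "V n \<subseteq> As n"
    proof
      fix v assume v: "v \<in> V n"
      then have "adj GG v x" using d adj_sym[of GG x v] by blast
      then show "v \<in> As n" using adj_GG[OF v x(1)] n x by simp
    qed
  qed
  obtain y where y: "y \<in> V n" using ne n by blast
  have "V n = {y}"
  proof (rule dom_within[OF n(2) y], intro ballI impI)
    fix z assume z: "z \<in> V n" "z \<noteq> y"
    have "\<forall>u\<in>As n. \<forall>v\<in>As n. u \<noteq> v \<longrightarrow> adj (Gs n) u v" using ks[OF n] unfolding KS_partition_def by blast
    then show "adj (Gs n) y z" using A y z by auto
  qed
  then show ?thesis using A by simp
qed

lemma sub_isol: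
  assumes n: "1 \<le> n" "n \<le> K" and x: "x \<in> V i" "i < n" and d: "\<forall>v\<in>V n. \<not> adj GG x v"
  shows "As n = {} \<and> card (V n) = 1"
proof -
  have A: "As n = {}"
  proof -
    have "\<forall>v\<in>V n. v \<notin> As n"
    proof
      fix v assume v: "v \<in> V n"
      then have "\<not> adj GG v x" using d adj_sym[of GG x v] by blast
      then show "v \<notin> As n" using adj_GG[OF v x(1)] n x by simp
    qed
    then show ?thesis using As_sub n by blast
  qed
  have B: "Bs n = V n" using ks[OF n] A unfolding KS_partition_def by auto
  obtain y where y: "y \<in> V n" using ne n by blast
  have "V n = {y}"
  proof (rule isol_within[OF n(2) y], intro ballI impI)
    fix z assume z: "z \<in> V n" "z \<noteq> y"
    have "\<forall>u\<in>Bs n. \<forall>v\<in>Bs n. \<not> adj (Gs n) u v" using ks[OF n] unfolding KS_partition_def by blast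
    then show "\<not> adj (Gs n) y z" using B y z by auto
  qed
  then show ?thesis using A by simp
qed

lemma dom_nb:
  assumes j: "Suc j \<le> K" and x: "x \<in> T j" and d: "\<forall>y\<in>T (Suc j). y \<noteq> x \<longrightarrow> adj GG x y"
  shows "ct j \<noteq> None \<and> ct j = ct (Suc j)"
proof -
  obtain i where i: "i \<le> j" "x \<in> V i" using x in_T by blast
  have top: "As (Suc j) = V (Suc j) \<and> card (V (Suc j)) = 1"
  proof (rule sub_dom[OF _ j i(2)])
    show "\<forall>v\<in>V (Suc j). adj GG x v"
    proof
      fix v assume v: "v \<in> V (Suc j)"
      then have "v \<noteq> x" using idx_unique[of x i "Suc j"] i j by auto
      then show "adj GG x v" using d v V_sub_T[of "Suc j" "Suc j"] by auto
    qed
  qed (use i in auto)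
  have low: "card (V j) = 1 \<and> (1 \<le> j \<longrightarrow> As j = V j)"
  proof (cases "i < j")
    case True
    have "As j = V j \<and> card (V j) = 1"
    proof (rule sub_dom[OF _ _ i(2) True])
      show "\<forall>v\<in>V j. adj GG x v"
      proof
        fix v assume v: "v \<in> V j"
        then have "v \<noteq> x" using idx_unique[of x i j] i j True by auto
        then show "adj GG x v" using d v V_sub_T[of j "Suc j"] by auto
      qed
    qed (use True j in auto)
    then show ?thesis by simp
  next
    case False
    then have ij: "i = j" using i by simp
    have Vj: "V j = {x}"
    proof (rule dom_within)
      show "\<forall>y\<in>V j. y \<noteq> x \<longrightarrow> adj (Gs j) x y"
      proof (intro ballI impI)
        fix y assume y: "y \<in> V j" "y \<noteq> x"
        have "y \<in> T (Suc j)" using y V_sub_T[of j "Suc j"] by auto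
        then have "adj GG x y" using d y by auto
        then show "adj (Gs j) x y" using adj_GG_same[of x j y] i ij j y by auto
      qed
    qed (use i ij j in auto)
    have "1 \<le> j \<longrightarrow> As j = V j"
    proof
      assume j1: "1 \<le> j"
      obtain v where v: "v \<in> V 0" using ne by blast
      have "v \<noteq> x" using idx_unique[of x j 0] v Vj j j1 by auto
      then have "adj GG x v" using d v V_sub_T[of 0 "Suc j"] by auto
      then have "x \<in> As j" using adj_GG[of x j v 0] Vj v j j1 by auto
      then show "As j = V j" using As_sub[OF j1] Vj j by auto
    qed
    then show ?thesis using Vj by simp
  qed
  show ?thesis
  proof (cases "j = 0")
    case True
    then show ?thesis using top low ct_0 ct_pos[of 1] j by auto
  next
    case False
    then show ?thesis using top low ct_pos[of j] ct_pos[of "Suc j"] j by auto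
  qed
qed

lemma isol_nb:
  assumes j: "Suc j \<le> K" and x: "x \<in> T j" and d: "\<forall>y\<in>T (Suc j). y \<noteq> x \<longrightarrow> \<not> adj GG x y"
  shows "ct j \<noteq> None \<and> ct j = ct (Suc j)"
proof -
  obtain i where i: "i \<le> j" "x \<in> V i" using x in_T by blast
  have top: "As (Suc j) = {} \<and> card (V (Suc j)) = 1"
  proof (rule sub_isol[OF _ j i(2)])
    show "\<forall>v\<in>V (Suc j). \<not> adj GG x v"
    proof
      fix v assume v: "v \<in> V (Suc j)"
      then have "v \<noteq> x" using idx_unique[of x i "Suc j"] i j by auto
      then show "\<not> adj GG x v" using d v V_sub_T[of "Suc j" "Suc j"] by auto
    qed
  qed (use i in auto)
  have low: "card (V j) = 1 \<and> (1 \<le> j \<longrightarrow> As j \<noteq> V j)"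
  proof (cases "i < j")
    case True
    have "As j = {} \<and> card (V j) = 1"
    proof (rule sub_isol[OF _ _ i(2) True])
      show "\<forall>v\<in>V j. \<not> adj GG x v"
      proof
        fix v assume v: "v \<in> V j"
        then have "v \<noteq> x" using idx_unique[of x i j] i j True by auto
        then show "\<not> adj GG x v" using d v V_sub_T[of j "Suc j"] by auto
      qed
    qed (use True j in auto)
    then show ?thesis using ne[of j] j by auto
  next
    case False
    then have ij: "i = j" using i by simp
    have Vj: "V j = {x}"
    proof (rule isol_within)
      show "\<forall>y\<in>V j. y \<noteq> x \<longrightarrow> \<not> adj (Gs j) x y"
      proof (intro ballI impI)
        fix y assume y: "y \<in> V j" "y \<noteq> x"
        have "y \<in> T (Suc j)" using y V_sub_T[of j "Suc j"] by auto
        then have "\<not> adj GG x y" using d y by auto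
        then show "\<not> adj (Gs j) x y" using adj_GG_same[of x j y] i ij j y by auto
      qed
    qed (use i ij j in auto)
    have "1 \<le> j \<longrightarrow> As j \<noteq> V j"
    proof
      assume j1: "1 \<le> j"
      obtain v where v: "v \<in> V 0" using ne by blast
      have "v \<noteq> x" using idx_unique[of x j 0] v Vj j j1 by auto
      then have "\<not> adj GG x v" using d v V_sub_T[of 0 "Suc j"] by auto
      then have "x \<notin> As j" using adj_GG[of x j v 0] Vj v j j1 by auto
      then show "As j \<noteq> V j" using Vj by auto
    qed
    then show ?thesis using Vj by simp
  qed
  have top2: "As (Suc j) \<noteq> V (Suc j)" using top ne[OF j] by auto
  show ?thesis
  proof (cases "j = 0")
    case True
    then show ?thesis using top top2 low ct_0 ct_pos[of 1] j by auto
  next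
    case False
    then show ?thesis using top top2 low ct_pos[of j] ct_pos[of "Suc j"] j by auto
  qed
qed

end



definition cut_in :: "'a graph \<Rightarrow> 'a set \<Rightarrow> 'a set \<Rightarrow> bool" where
  "cut_in H S Y \<longleftrightarrow> Y \<subseteq> S \<and> S - Y \<noteq> {} \<and> (\<exists>A B. A \<union> B = S - Y \<and> A \<inter> B = {} \<and>
     (\<forall>u\<in>A. \<forall>v\<in>A. u \<noteq> v \<longrightarrow> adj H u v) \<and> (\<forall>u\<in>B. \<forall>v\<in>B. \<not> adj H u v) \<and>
     (\<forall>a\<in>A. \<forall>y\<in>Y. adj H a y) \<and> (\<forall>b\<in>B. \<forall>y\<in>Y. \<not> adj H b y))"

context cdec begin

lemma T_Suc: "T (Suc m) = T m \<union> V (Suc m)"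
  unfolding T_def by (auto simp: atMost_Suc)

lemma T_0: "T 0 = V 0"
  unfolding T_def by auto

lemma cut_lemma:
  "m \<le> K \<Longrightarrow> cut_in GG (T m) Y \<Longrightarrow> j < m \<Longrightarrow> \<not> (ct j \<noteq> None \<and> ct j = ct (Suc j))
   \<Longrightarrow> T j \<subseteq> Y \<or> Y \<subseteq> T j"
proof (induction m arbitrary: Y j)
  case 0 then show ?case by simp
next
  case (Suc m)
  note m = Suc.prems(1) and cut = Suc.prems(2) and jm = Suc.prems(3) and bd = Suc.prems(4)
  obtain A B where Ysub: "Y \<subseteq> T (Suc m)" and Xne: "T (Suc m) - Y \<noteq> {}"
    and AB: "A \<union> B = T (Suc m) - Y" "A \<inter> B = {}"
    and cA: "\<forall>u\<in>A. \<forall>v\<in>A. u \<noteq> v \<longrightarrow> adj GG u v"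
    and iB: "\<forall>u\<in>B. \<forall>v\<in>B. \<not> adj GG u v"
    and cAY: "\<forall>a\<in>A. \<forall>y\<in>Y. adj GG a y"
    and iBY: "\<forall>b\<in>B. \<forall>y\<in>Y. \<not> adj GG b y"
    using cut unfolding cut_in_def by (elim conjE exE) (rule that)
  let ?W = "V (Suc m)"
  have WT: "?W \<subseteq> T (Suc m)" using T_Suc by auto
  have adjW: "\<And>u v. u \<in> ?W \<Longrightarrow> v \<in> ?W \<Longrightarrow> adj (Gs (Suc m)) u v = adj GG u v"
    using adj_GG_same m by auto
  consider (split) "?W \<inter> Y \<noteq> {}" "?W - Y \<noteq> {}" | (inY) "?W \<subseteq> Y" | (outY) "?W \<inter> Y = {}"
    by auto
  then show ?case
  proof cases
    case split
    have "\<not> indecomposable (Gs (Suc m))"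
    proof (rule decomp[OF gr[OF m], of "?W \<inter> Y" "A \<inter> ?W" "B \<inter> ?W"])
      show "A \<inter> ?W \<union> B \<inter> ?W = ?W - ?W \<inter> Y" using AB WT by auto
      show "\<forall>u\<in>A \<inter> ?W. \<forall>v\<in>A \<inter> ?W. u \<noteq> v \<longrightarrow> adj (Gs (Suc m)) u v" using cA adjW by auto
      show "\<forall>u\<in>B \<inter> ?W. \<forall>v\<in>B \<inter> ?W. \<not> adj (Gs (Suc m)) u v" using iB adjW by auto
      show "\<forall>a\<in>A \<inter> ?W. \<forall>y\<in>?W \<inter> Y. adj (Gs (Suc m)) a y" using cAY adjW by auto
      show "\<forall>b\<in>B \<inter> ?W. \<forall>y\<in>?W \<inter> Y. \<not> adj (Gs (Suc m)) b y" using iBY adjW by auto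
    qed (use split AB in auto)
    then show ?thesis using indec m by blast
  next
    case inY
    have XT: "T (Suc m) - Y \<subseteq> T m" using inY T_Suc by auto
    have jK: "Suc j \<le> K" using jm m by simp
    have "T j \<subseteq> Y"
    proof (rule ccontr)
      assume "\<not> T j \<subseteq> Y"
      then obtain x where x: "x \<in> T j" "x \<notin> Y" by blast
      have xT: "x \<in> T (Suc m)" using x T_mono[of j "Suc m"] jm by auto
      have TT: "T (Suc j) \<subseteq> T (Suc m)" using T_mono jm by simp
      have lowadj: "\<And>z w. z \<in> T m \<Longrightarrow> w \<in> ?W \<Longrightarrow> adj GG w z \<longleftrightarrow> w \<in> As (Suc m)"
      proof -
        fix z w assume z: "z \<in> T m" and w: "w \<in> ?W"
        obtain p where p: "p \<le> m" "z \<in> V p" using z in_T by blast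
        show "adj GG w z \<longleftrightarrow> w \<in> As (Suc m)" using adj_GG[OF w p(2) m] p m by auto
      qed
      show False
      proof (cases "As (Suc m) = {}")
        case False
        then obtain w where w: "w \<in> As (Suc m)" by blast
        have wW: "w \<in> ?W" using w As_sub[of "Suc m"] m by auto
        have Bempty: "B = {}"
        proof (rule ccontr)
          assume "B \<noteq> {}"
          then obtain b where b: "b \<in> B" by blast
          have "b \<in> T m" using b AB XT by auto
          then have "adj GG w b" using lowadj wW w by auto
          moreover have "\<not> adj GG b w" using iBY b wW inY by auto
          ultimately show False using adj_sym[of GG w b] by simp
        qed
        have xA: "x \<in> A" using x xT AB Bempty by auto
        have "\<forall>y\<in>T (Suc j). y \<noteq> x \<longrightarrow> adj GG x y"
        proof (intro ballI impI)
          fix y assume y: "y \<in> T (Suc j)" "y \<noteq> x"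
          show "adj GG x y"
          proof (cases "y \<in> Y")
            case True then show ?thesis using cAY xA by auto
          next
            case False
            then have "y \<in> A" using y TT AB Bempty by auto
            then show ?thesis using cA xA y by auto
          qed
        qed
        then show False using dom_nb[OF jK x(1)] bd by blast
      next
        case True
        obtain w where wW: "w \<in> ?W" using ne m by blast
        have Aempty: "A = {}"
        proof (rule ccontr)
          assume "A \<noteq> {}"
          then obtain a where a: "a \<in> A" by blast
          have "a \<in> T m" using a AB XT by auto
          then have "\<not> adj GG w a" using lowadj wW True by auto
          moreover have "adj GG a w" using cAY a wW inY by auto
          ultimately show False using adj_sym[of GG w a] by simp
        qed
        have xB: "x \<in> B" using x xT AB Aempty by auto
        have "\<forall>y\<in>T (Suc j). y \<noteq> x \<longrightarrow> \<not> adj GG x y"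
        proof (intro ballI impI)
          fix y assume y: "y \<in> T (Suc j)" "y \<noteq> x"
          show "\<not> adj GG x y"
          proof (cases "y \<in> Y")
            case True then show ?thesis using iBY xB by auto
          next
            case False
            then have "y \<in> B" using y TT AB Aempty by auto
            then show ?thesis using iB xB by auto
          qed
        qed
        then show False using isol_nb[OF jK x(1)] bd by blast
      qed
    qed
    then show ?thesis by blast
  next
    case outY
    have YT: "Y \<subseteq> T m" using Ysub outY T_Suc by auto
    show ?thesis
    proof (cases "j = m")
      case True then show ?thesis using YT by simp
    next
      case False
      then have jm': "j < m" using jm by simp
      show ?thesis
      proof (cases "Y = T m")
        case True then show ?thesis using T_mono[of j m] jm' by simp
      next
        case False
        have "cut_in GG (T m) Y"
          unfolding cut_in_def
        proof (intro conjI exI)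
          show "Y \<subseteq> T m" by fact
          show "T m - Y \<noteq> {}" using YT False by auto
          show "A \<inter> T m \<union> B \<inter> T m = T m - Y" using AB T_Suc by auto
        qed (use AB cA iB cAY iBY in auto)
        then show ?thesis using Suc.IH[of Y j] m jm' bd by simp
      qed
    qed
  qed
qed

end



lemma cut_aut:
  assumes p: "\<pi> \<in> Aut H" and c: "cut_in H (verts H) Y"
  shows "cut_in H (verts H) (\<pi> ` Y)"
proof -
  obtain A B where Ysub: "Y \<subseteq> verts H" and Xne: "verts H - Y \<noteq> {}"
    and AB: "A \<union> B = verts H - Y" "A \<inter> B = {}"
    and cA: "\<forall>u\<in>A. \<forall>v\<in>A. u \<noteq> v \<longrightarrow> adj H u v"
    and iB: "\<forall>u\<in>B. \<forall>v\<in>B. \<not> adj H u v"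
    and cAY: "\<forall>a\<in>A. \<forall>y\<in>Y. adj H a y"
    and iBY: "\<forall>b\<in>B. \<forall>y\<in>Y. \<not> adj H b y"
    using c unfolding cut_in_def by (elim conjE exE) (rule that)
  have bij: "bij_betw \<pi> (verts H) (verts H)" and pa: "\<forall>u\<in>verts H. \<forall>v\<in>verts H. adj H u v \<longleftrightarrow> adj H (\<pi> u) (\<pi> v)"
    using p by (simp_all add: Aut_def)
  have inj: "inj_on \<pi> (verts H)" and im: "\<pi> ` verts H = verts H" using bij unfolding bij_betw_def by auto
  have AV: "A \<subseteq> verts H" "B \<subseteq> verts H" using AB by auto
  have diff: "verts H - \<pi> ` Y = \<pi> ` (verts H - Y)"
    using inj_on_image_set_diff[OF inj _ Ysub] im by simp
  show ?thesis
    unfolding cut_in_def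
  proof (intro conjI exI)
    show "\<pi> ` Y \<subseteq> verts H" using Ysub im by auto
    show "verts H - \<pi> ` Y \<noteq> {}" using diff Xne by auto
    show "\<pi> ` A \<union> \<pi> ` B = verts H - \<pi> ` Y" using diff AB by auto
    show "\<pi> ` A \<inter> \<pi> ` B = {}" using AB(2) inj AV by (metis inj_on_image_Int image_empty)
    show "\<forall>u\<in>\<pi> ` A. \<forall>v\<in>\<pi> ` A. u \<noteq> v \<longrightarrow> adj H u v"
    proof (intro ballI impI)
      fix u v assume "u \<in> \<pi> ` A" "v \<in> \<pi> ` A" "u \<noteq> v"
      then obtain a b where ab: "a \<in> A" "b \<in> A" "u = \<pi> a" "v = \<pi> b" "a \<noteq> b" by blast
      then have "adj H a b" using cA by blast
      moreover have "a \<in> verts H" "b \<in> verts H" using ab AV by auto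
      ultimately show "adj H u v" using pa ab by blast
    qed
    show "\<forall>u\<in>\<pi> ` B. \<forall>v\<in>\<pi> ` B. \<not> adj H u v"
    proof (intro ballI)
      fix u v assume "u \<in> \<pi> ` B" "v \<in> \<pi> ` B"
      then obtain a b where ab: "a \<in> B" "b \<in> B" "u = \<pi> a" "v = \<pi> b" by blast
      then have "\<not> adj H a b" using iB by blast
      moreover have "a \<in> verts H" "b \<in> verts H" using ab AV by auto
      ultimately show "\<not> adj H u v" using pa ab by blast
    qed
    show "\<forall>u\<in>\<pi> ` A. \<forall>v\<in>\<pi> ` Y. adj H u v"
    proof (intro ballI)
      fix u v assume "u \<in> \<pi> ` A" "v \<in> \<pi> ` Y"
      then obtain a b where ab: "a \<in> A" "b \<in> Y" "u = \<pi> a" "v = \<pi> b" by blast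
      then have "adj H a b" using cAY by blast
      moreover have "a \<in> verts H" "b \<in> verts H" using ab AV Ysub by auto
      ultimately show "adj H u v" using pa ab by blast
    qed
    show "\<forall>u\<in>\<pi> ` B. \<forall>v\<in>\<pi> ` Y. \<not> adj H u v"
    proof (intro ballI)
      fix u v assume "u \<in> \<pi> ` B" "v \<in> \<pi> ` Y"
      then obtain a b where ab: "a \<in> B" "b \<in> Y" "u = \<pi> a" "v = \<pi> b" by blast
      then have "\<not> adj H a b" using iBY by blast
      moreover have "a \<in> verts H" "b \<in> verts H" using ab AV Ysub by auto
      ultimately show "\<not> adj H u v" using pa ab by blast
    qed
  qed
qed

context cdec begin

lemma finite_V: "i \<le> K \<Longrightarrow> finite (V i)"
  using gr[of i] unfolding is_graph_def by blast

lemma finite_T: "m \<le> K \<Longrightarrow> finite (T m)"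
  unfolding T_def by (rule finite_UN_I) (auto intro: finite_V)

lemma T_cut: assumes j: "j < K" shows "cut_in GG (T K) (T j)"
proof -
  define A where "A = (\<Union>i\<in>{Suc j..K}. As i)"
  define B where "B = (\<Union>i\<in>{Suc j..K}. Bs i)"
  have notT: "x \<notin> T j" if "x \<in> V i" "j < i" "i \<le> K" for x i
  proof
    assume "x \<in> T j"
    then obtain p where "p \<le> j" "x \<in> V p" using in_T by blast
    then show False using idx_unique[of x i p] that j by auto
  qed
  have ks': "\<And>i. j < i \<Longrightarrow> i \<le> K \<Longrightarrow> KS_partition (Gs i) (As i) (Bs i)"
    using ks by simp
  have AsV: "As i \<subseteq> V i \<and> Bs i \<subseteq> V i \<and> As i \<inter> Bs i = {} \<and> As i \<union> Bs i = V i"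
    if "j < i" "i \<le> K" for i
  proof -
    have "As i \<union> Bs i = V i" "As i \<inter> Bs i = {}" using ks'[OF that] unfolding KS_partition_def by simp_all
    then show ?thesis by blast
  qed
  show ?thesis
    unfolding cut_in_def
  proof (intro conjI exI)
    show "T j \<subseteq> T K" using T_mono j by simp
    obtain z where z: "z \<in> V K" using ne by blast
    then have "z \<notin> T j" using notT j by auto
    moreover have "z \<in> T K" using z V_sub_T by auto
    ultimately show "T K - T j \<noteq> {}" by blast
    show "A \<union> B = T K - T j"
    proof
      show "A \<union> B \<subseteq> T K - T j"
      proof
        fix x assume "x \<in> A \<union> B"
        then obtain i where i: "j < i" "i \<le> K" "x \<in> As i \<or> x \<in> Bs i" unfolding A_def B_def by (auto simp: Suc_le_eq)
        then have "x \<in> V i" using AsV[OF i(1,2)] by blast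
        then show "x \<in> T K - T j" using notT[OF _ i(1,2)] V_sub_T[OF i(2)] by blast
      qed
      show "T K - T j \<subseteq> A \<union> B"
      proof
        fix x assume x: "x \<in> T K - T j"
        then obtain i where i: "i \<le> K" "x \<in> V i" using in_T by blast
        have "j < i" using i x V_sub_T[of i j] by (cases "i \<le> j") auto
        then have "x \<in> As i \<or> x \<in> Bs i" "i \<in> {Suc j..K}" using AsV[of i] i by auto
        then show "x \<in> A \<union> B" unfolding A_def B_def by blast
      qed
    qed
    show "A \<inter> B = {}"
    proof (rule ccontr)
      assume "A \<inter> B \<noteq> {}"
      then obtain x i i' where x: "j < i" "i \<le> K" "x \<in> As i" "j < i'" "i' \<le> K" "x \<in> Bs i'"
        unfolding A_def B_def by (auto simp: Suc_le_eq)
      have "x \<in> V i" "x \<in> V i'" using x AsV[of i] AsV[of i'] by auto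
      then have "i = i'" using idx_unique x by blast
      then show False using x AsV[of i] by auto
    qed
    show "\<forall>u\<in>A. \<forall>v\<in>A. u \<noteq> v \<longrightarrow> adj GG u v"
    proof (intro ballI impI)
      fix u v assume "u \<in> A" "v \<in> A" "u \<noteq> v"
      then obtain i i' where u: "j < i" "i \<le> K" "u \<in> As i" and v: "j < i'" "i' \<le> K" "v \<in> As i'"
        and uv: "u \<noteq> v" unfolding A_def by (auto simp: Suc_le_eq)
      have uV: "u \<in> V i" and vV: "v \<in> V i'" using u v AsV by auto
      show "adj GG u v"
      proof (cases "i = i'")
        case True
        then show ?thesis using ks'[OF u(1,2)] adj_GG_same[of u i v] uV vV u v uv
          unfolding KS_partition_def by auto
      next
        case False
        then show ?thesis using adj_GG[OF uV vV u(2) v(2)] u v by auto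
      qed
    qed
    show "\<forall>u\<in>B. \<forall>v\<in>B. \<not> adj GG u v"
    proof (intro ballI)
      fix u v assume "u \<in> B" "v \<in> B"
      then obtain i i' where u: "j < i" "i \<le> K" "u \<in> Bs i" and v: "j < i'" "i' \<le> K" "v \<in> Bs i'"
        unfolding B_def by (auto simp: Suc_le_eq)
      have uV: "u \<in> V i" and vV: "v \<in> V i'" using u v AsV by auto
      have uA: "u \<notin> As i" and vA: "v \<notin> As i'" using u v AsV by auto
      show "\<not> adj GG u v"
      proof (cases "i = i'")
        case True
        then show ?thesis using ks'[OF u(1,2)] adj_GG_same[of u i v] uV vV u v
          unfolding KS_partition_def by auto
      next
        case False
        then show ?thesis using adj_GG[OF uV vV u(2) v(2)] uA vA by auto
      qed
    qed
    show "\<forall>a\<in>A. \<forall>y\<in>T j. adj GG a y"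
    proof (intro ballI)
      fix a y assume "a \<in> A" "y \<in> T j"
      then obtain i p where a: "j < i" "i \<le> K" "a \<in> As i" and y: "p \<le> j" "y \<in> V p"
        unfolding A_def using in_T by (auto simp: Suc_le_eq)
      have aV: "a \<in> V i" using a AsV by auto
      show "adj GG a y" using adj_GG[OF aV y(2) a(2)] a y j by auto
    qed
    show "\<forall>b\<in>B. \<forall>y\<in>T j. \<not> adj GG b y"
    proof (intro ballI)
      fix b y assume "b \<in> B" "y \<in> T j"
      then obtain i p where b: "j < i" "i \<le> K" "b \<in> Bs i" and y: "p \<le> j" "y \<in> V p"
        unfolding B_def using in_T by (auto simp: Suc_le_eq)
      have bV: "b \<in> V i" and bA: "b \<notin> As i" using b AsV by auto
      show "\<not> adj GG b y" using adj_GG[OF bV y(2) b(2)] b y j bA by auto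
    qed
  qed
qed

lemma T_inv:
  assumes p: "\<pi> \<in> Aut GG" and j: "j < K" and bd: "\<not> (ct j \<noteq> None \<and> ct j = ct (Suc j))"
  shows "\<pi> ` T j = T j"
proof -
  have c: "cut_in GG (verts GG) (T j)" using T_cut[OF j] verts_GG by simp
  have "cut_in GG (T K) (\<pi> ` T j)" using cut_aut[OF p c] verts_GG by simp
  then have o: "T j \<subseteq> \<pi> ` T j \<or> \<pi> ` T j \<subseteq> T j" using cut_lemma[of K] j bd by blast
  have inj: "inj_on \<pi> (T j)"
    using p T_mono[of j K] j verts_GG unfolding Aut_def bij_betw_def by (auto intro: inj_on_subset)
  have fin: "finite (T j)" using finite_T j by simp
  have cd: "card (\<pi> ` T j) = card (T j)" using card_image[OF inj] .
  show ?thesis using o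
  proof
    assume "T j \<subseteq> \<pi> ` T j"
    then show ?thesis using card_subset_eq[of "\<pi> ` T j" "T j"] fin cd by (metis finite_imageI)
  next
    assume "\<pi> ` T j \<subseteq> T j"
    then show ?thesis using card_subset_eq[OF fin] cd by blast
  qed
qed

end



lemma KS_sub:
  assumes g: "is_graph H" and ind: "indecomposable H" and c: "card (verts H) \<noteq> 1"
    and k1: "KS_partition H A B" and k2: "KS_partition H A2 B2"
  shows "A \<subseteq> A2"
proof
  fix a assume aA: "a \<in> A"
  have AB: "A \<union> B = verts H" "A \<inter> B = {}" and cA: "\<forall>u\<in>A. \<forall>v\<in>A. u \<noteq> v \<longrightarrow> adj H u v"
    and iB: "\<forall>u\<in>B. \<forall>v\<in>B. \<not> adj H u v" using k1 unfolding KS_partition_def by simp_all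
  have AB2: "A2 \<union> B2 = verts H" "A2 \<inter> B2 = {}" and cA2: "\<forall>u\<in>A2. \<forall>v\<in>A2. u \<noteq> v \<longrightarrow> adj H u v"
    and iB2: "\<forall>u\<in>B2. \<forall>v\<in>B2. \<not> adj H u v" using k2 unfolding KS_partition_def by simp_all
  have nsing: "verts H - {x} \<noteq> {}" if "x \<in> verts H" for x
  proof
    assume "verts H - {x} = {}"
    then have "verts H = {x}" using that by auto
    then show False using c by simp
  qed
  show "a \<in> A2"
  proof (rule ccontr)
    assume "a \<notin> A2"
    then have aB2: "a \<in> B2" using aA AB AB2 by blast
    have "\<exists>b\<in>B. adj H a b"
    proof (rule ccontr)
      assume nb: "\<not> (\<exists>b\<in>B. adj H a b)"
      have "\<not> indecomposable H"
      proof (rule decomp[OF g, of "{a}" "A - {a}" B])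
        show "\<forall>u\<in>A - {a}. \<forall>y\<in>{a}. adj H u y" using cA aA by auto
        show "\<forall>u\<in>B. \<forall>y\<in>{a}. \<not> adj H u y" using nb adj_sym[of H a] by auto
      qed (use aA AB cA iB nsing[of a] in auto)
      then show False using ind by blast
    qed
    then obtain b where b: "b \<in> B" "adj H a b" by blast
    have bA2: "b \<in> A2"
    proof (rule ccontr)
      assume "b \<notin> A2"
      then have "b \<in> B2" using b AB AB2 by blast
      then show False using iB2 aB2 b by blast
    qed
    have "\<forall>a'\<in>A. adj H b a'"
    proof
      fix a' assume a': "a' \<in> A"
      show "adj H b a'"
      proof (cases "a' = a")
        case True then show ?thesis using b(2) adj_sym[of H a b] by simp
      next
        case False
        have "a' \<notin> B2" using iB2 aB2 cA a' aA False by blast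
        then have "a' \<in> A2" using a' AB AB2 by blast
        moreover have "b \<noteq> a'" using a' b AB by blast
        ultimately show ?thesis using cA2 bA2 by blast
      qed
    qed
    have "\<not> indecomposable H"
    proof (rule decomp[OF g, of "{b}" A "B - {b}"])
      show "\<forall>u\<in>A. \<forall>y\<in>{b}. adj H u y" using \<open>\<forall>a'\<in>A. adj H b a'\<close> adj_sym[of H b] by auto
    qed (use b AB cA iB nsing[of b] in auto)
    then show False using ind by blast
  qed
qed

lemma KS_aut:
  assumes g: "is_graph H" and ind: "indecomposable H" and c: "card (verts H) \<noteq> 1"
    and k: "KS_partition H A B" and s: "\<sigma> \<in> Aut H"
  shows "\<sigma> ` A = A"
proof -
  have bij: "bij_betw \<sigma> (verts H) (verts H)" and pa: "\<forall>u\<in>verts H. \<forall>v\<in>verts H. adj H u v \<longleftrightarrow> adj H (\<sigma> u) (\<sigma> v)"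
    using s by (simp_all add: Aut_def)
  have inj: "inj_on \<sigma> (verts H)" and im: "\<sigma> ` verts H = verts H" using bij unfolding bij_betw_def by auto
  have AB: "A \<union> B = verts H" "A \<inter> B = {}" and cA: "\<forall>u\<in>A. \<forall>v\<in>A. u \<noteq> v \<longrightarrow> adj H u v"
    and iB: "\<forall>u\<in>B. \<forall>v\<in>B. \<not> adj H u v" using k unfolding KS_partition_def by simp_all
  have k2: "KS_partition H (\<sigma> ` A) (\<sigma> ` B)"
    unfolding KS_partition_def
  proof (intro conjI)
    show "\<sigma> ` A \<union> \<sigma> ` B = verts H" using AB im image_Un[of \<sigma> A B] by simp
    show "\<sigma> ` A \<inter> \<sigma> ` B = {}" using AB inj_on_image_Int[OF inj, of A B] by auto
    show "\<forall>u\<in>\<sigma> ` A. \<forall>v\<in>\<sigma> ` A. u \<noteq> v \<longrightarrow> adj H u v"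
    proof (intro ballI impI)
      fix u v assume "u \<in> \<sigma> ` A" "v \<in> \<sigma> ` A" "u \<noteq> v"
      then obtain a b where ab: "a \<in> A" "b \<in> A" "u = \<sigma> a" "v = \<sigma> b" "a \<noteq> b" by blast
      then have "adj H a b" using cA by blast
      moreover have "a \<in> verts H" "b \<in> verts H" using ab AB by auto
      ultimately show "adj H u v" using pa ab by blast
    qed
    show "\<forall>u\<in>\<sigma> ` B. \<forall>v\<in>\<sigma> ` B. \<not> adj H u v"
    proof (intro ballI)
      fix u v assume "u \<in> \<sigma> ` B" "v \<in> \<sigma> ` B"
      then obtain a b where ab: "a \<in> B" "b \<in> B" "u = \<sigma> a" "v = \<sigma> b" by blast
      then have "\<not> adj H a b" using iB by blast
      moreover have "a \<in> verts H" "b \<in> verts H" using ab AB by auto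
      ultimately show "\<not> adj H u v" using pa ab by blast
    qed
  qed
  show ?thesis using KS_sub[OF g ind c k k2] KS_sub[OF g ind c k2 k] by blast
qed




locale ccomp = cdec K Gs As Bs
  for K :: nat and Gs :: "nat \<Rightarrow> 'a graph" and As Bs :: "nat \<Rightarrow> 'a set" +
  fixes l :: nat and f :: "nat \<Rightarrow> nat" and G' :: "nat \<Rightarrow> 'a graph" and A' B' :: "nat \<Rightarrow> 'a set"
  assumes f0: "f 0 = 0" and fmono: "mono_on {0..K} f" and fsurj: "f ` {0..K} = {0..l}"
  and fstep: "\<And>i. i < K \<Longrightarrow> f i = f (Suc i) \<longleftrightarrow> (comp_type K Gs As i \<noteq> None \<and> comp_type K Gs As i = comp_type K Gs As (Suc i))"
  and fnone: "\<And>i. i \<le> K \<Longrightarrow> comp_type K Gs As i = None \<Longrightarrow>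
            G' (f i) = Gs i \<and> (1 \<le> f i \<longrightarrow> A' (f i) = As i \<and> B' (f i) = Bs i)"
  and fsome: "\<And>i. i \<le> K \<Longrightarrow> let U = \<Union>{verts (Gs i') | i'. i' \<le> K \<and> f i' = f i} in
            (comp_type K Gs As i = Some TK1 \<longrightarrow>
               G' (f i) = complete_graph U \<and> (1 \<le> f i \<longrightarrow> A' (f i) = U \<and> B' (f i) = {})) \<and>
            (comp_type K Gs As i = Some TS1 \<longrightarrow>
               G' (f i) = edgeless_graph U \<and> (1 \<le> f i \<longrightarrow> A' (f i) = {} \<and> B' (f i) = U))"
begin

definition "VV a = {x. \<exists>i\<le>K. f i = a \<and> x \<in> V i}"

lemma fle: "i \<le> i' \<Longrightarrow> i' \<le> K \<Longrightarrow> f i \<le> f i'"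
  using fmono unfolding mono_on_def by auto

lemma step_exists: "i \<le> i' \<Longrightarrow> f i \<noteq> f i' \<Longrightarrow> \<exists>j. i \<le> j \<and> j < i' \<and> f j \<noteq> f (Suc j)"
proof (induction i')
  case 0 then show ?case by simp
next
  case (Suc i')
  show ?case
  proof (cases "i = Suc i'")
    case True then show ?thesis using Suc by simp
  next
    case False
    then have ii: "i \<le> i'" using Suc by simp
    show ?thesis
    proof (cases "f i = f i'")
      case True then show ?thesis using Suc ii by auto
    next
      case False
      then show ?thesis using Suc.IH ii less_Suc_eq by blast
    qed
  qed
qed

lemma run_ct: "i \<le> i' \<Longrightarrow> i' \<le> K \<Longrightarrow> f i = f i' \<Longrightarrow> ct i = ct i' \<and> (i < i' \<longrightarrow> ct i \<noteq> None)"
proof (induction i')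
  case 0 then show ?case by simp
next
  case (Suc i')
  show ?case
  proof (cases "i = Suc i'")
    case True then show ?thesis by simp
  next
    case False
    then have ii: "i \<le> i'" using Suc by simp
    have "f i \<le> f i'" using fle[of i i'] ii Suc.prems by auto
    moreover have "f i' \<le> f (Suc i')" using fle[of i' "Suc i'"] Suc.prems by auto
    ultimately have "f i' = f (Suc i')" using Suc.prems by simp
    moreover have "i' < K" using Suc.prems by simp
    ultimately have st: "ct i' \<noteq> None \<and> ct i' = ct (Suc i')" using fstep by blast
    have "f i = f i'" using \<open>f i' = f (Suc i')\<close> Suc.prems by simp
    have "ct i = ct i' \<and> (i < i' \<longrightarrow> ct i \<noteq> None)"
      by (rule Suc.IH) (use ii Suc.prems \<open>f i = f i'\<close> in auto)
    then have c1: "ct i = ct i'" and c2: "i < i' \<longrightarrow> ct i \<noteq> None" by blast+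
    have c3: "ct i \<noteq> None"
    proof (cases "i < i'")
      case True then show ?thesis using c2 by blast
    next
      case False then have "i = i'" using ii by simp
      then show ?thesis using st by blast
    qed
    have "ct i = ct (Suc i')" using c1 st by argo
    then show ?thesis using c3 by blast
  qed
qed

lemma bd_of: "j < K \<Longrightarrow> f j \<noteq> f (Suc j) \<Longrightarrow> \<not> (ct j \<noteq> None \<and> ct j = ct (Suc j))"
  using fstep by simp

lemma aut_f:
  assumes p: "\<pi> \<in> Aut GG" and x: "x \<in> V i" "i \<le> K" and px: "\<pi> x \<in> V i'" "i' \<le> K"
  shows "f i = f i'"
proof (rule ccontr)
  assume ne: "f i \<noteq> f i'"
  have inj: "inj_on \<pi> (T K)" using p verts_GG unfolding Aut_def bij_betw_def by auto
  show False
  proof (cases "i \<le> i'")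
    case True
    obtain j where j: "i \<le> j" "j < i'" "f j \<noteq> f (Suc j)" using step_exists[OF True ne] by blast
    have inv: "\<pi> ` T j = T j" using T_inv[OF p] j bd_of px by simp
    have "x \<in> T j" using x j V_sub_T by auto
    then have "\<pi> x \<in> T j" using inv by blast
    then obtain q where "q \<le> j" "\<pi> x \<in> V q" using in_T by blast
    then show False using idx_unique[of "\<pi> x" q i'] px j by auto
  next
    case False
    then have ii: "i' \<le> i" by simp
    obtain j where j: "i' \<le> j" "j < i" "f j \<noteq> f (Suc j)" using step_exists[OF ii] ne by metis
    have inv: "\<pi> ` T j = T j" using T_inv[OF p] j bd_of x by simp
    have "\<pi> x \<in> T j" using px j V_sub_T by auto
    then obtain z where z: "z \<in> T j" "\<pi> z = \<pi> x" using inv by (metis imageE)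
    have "z \<in> T K" "x \<in> T K" using z T_mono[of j K] j x V_sub_T by auto
    then have "z = x" using inj z inj_on_def by metis
    then obtain q where "q \<le> j" "x \<in> V q" using z in_T by blast
    then show False using idx_unique[of x q i] x j by auto
  qed
qed

end



lemma adj_complete: "adj (complete_graph U) u v \<longleftrightarrow> u \<in> U \<and> v \<in> U \<and> u \<noteq> v"
proof -
  have "adj (complete_graph U) u v \<longleftrightarrow> {u,v} \<in> {{a, b} | a b. a \<in> U \<and> b \<in> U \<and> a \<noteq> b}"
    by (simp add: complete_graph_def adj_def edges_def)
  also have "\<dots> \<longleftrightarrow> (u \<in> U \<and> v \<in> U \<and> u \<noteq> v) \<or> (v \<in> U \<and> u \<in> U \<and> v \<noteq> u)"
    by (rule doubleton_mem)
  finally show ?thesis by blast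
qed

lemma adj_edgeless: "\<not> adj (edgeless_graph U) u v"
  by (simp add: edgeless_graph_def adj_def edges_def)

context ccomp begin

lemma U_eq: "\<Union>{V i' | i'. i' \<le> K \<and> f i' = f i} = VV (f i)"
  unfolding VV_def by auto

lemma run_same: "p \<le> K \<Longrightarrow> i \<le> K \<Longrightarrow> f p = f i \<Longrightarrow> ct p = ct i"
proof -
  assume a: "p \<le> K" "i \<le> K" "f p = f i"
  show "ct p = ct i"
  proof (cases "p \<le> i")
    case True then show ?thesis using run_ct[of p i] a by blast
  next
    case False then have "i \<le> p" by simp
    then show ?thesis using run_ct[of i p] a by (metis (no_types))
  qed
qed

lemma ct_some: "p \<le> K \<Longrightarrow> ct p = Some t \<Longrightarrow> card (V p) = 1 \<and> (1 \<le> p \<longrightarrow> ct p = Some (if As p = V p then TK1 else TS1))"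
proof -
  assume p: "p \<le> K" "ct p = Some t"
  show ?thesis
  proof (cases "p = 0")
    case True
    have "1 \<le> K \<and> card (V 0) = 1 \<and> card (V 1) = 1"
    proof (rule ccontr)
      assume "\<not> (1 \<le> K \<and> card (V 0) = 1 \<and> card (V 1) = 1)"
      then have "ct 0 = None" using ct_0 if_not_P by (metis (no_types, lifting))
      then show False using p True by simp
    qed
    then show ?thesis using True by simp
  next
    case False
    then have p1: "1 \<le> p" by simp
    have c: "card (V p) = 1"
    proof (rule ccontr)
      assume "card (V p) \<noteq> 1"
      then have "ct p = None" using ct_pos[OF p1 p(1)] if_not_P by (metis (no_types, lifting))
      then show False using p by simp
    qed
    have "ct p = (if card (V p) = 1 then Some (if As p = V p then TK1 else TS1) else None)"
      by (rule ct_pos[OF p1 p(1)])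
    also have "\<dots> = Some (if As p = V p then TK1 else TS1)" using c by (rule if_P)
    finally have "ct p = Some (if As p = V p then TK1 else TS1)" .
    then show ?thesis using c by simp
  qed
qed

lemma ct_TK1: "p \<le> K \<Longrightarrow> ct p = Some TK1 \<Longrightarrow> card (V p) = 1 \<and> (1 \<le> p \<longrightarrow> As p = V p)"
proof -
  assume p: "p \<le> K" "ct p = Some TK1"
  have "card (V p) = 1 \<and> (1 \<le> p \<longrightarrow> ct p = Some (if As p = V p then TK1 else TS1))"
    using ct_some[OF p] .
  then show ?thesis using p by (cases "As p = V p") auto
qed

lemma ct_TS1: "p \<le> K \<Longrightarrow> ct p = Some TS1 \<Longrightarrow> card (V p) = 1 \<and> (1 \<le> p \<longrightarrow> As p = {})"
proof -
  assume p: "p \<le> K" "ct p = Some TS1"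
  have h: "card (V p) = 1 \<and> (1 \<le> p \<longrightarrow> ct p = Some (if As p = V p then TK1 else TS1))"
    using ct_some[OF p] .
  have "1 \<le> p \<longrightarrow> As p = {}"
  proof
    assume p1: "1 \<le> p"
    have ne: "As p \<noteq> V p" using h p p1 by (cases "As p = V p") auto
    obtain x where x: "V p = {x}" using h card_1_singletonE by blast
    have "As p \<subseteq> V p" using As_sub p1 p by simp
    then show "As p = {}" using subset_singletonD[of "As p" x] ne x by auto
  qed
  then show ?thesis using h by simp
qed

lemma comp_cases:
  assumes a: "a \<le> l"
  shows "\<exists>i\<le>K. f i = a \<and>
    ((ct i = None \<and> G' a = Gs i \<and> VV a = V i \<and> (1 \<le> a \<longrightarrow> A' a = As i)) \<or>
     (ct i = Some TK1 \<and> G' a = complete_graph (VV a) \<and> (1 \<le> a \<longrightarrow> A' a = VV a)) \<or>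
     (ct i = Some TS1 \<and> G' a = edgeless_graph (VV a) \<and> (1 \<le> a \<longrightarrow> A' a = {})))"
proof -
  have "a \<in> f ` {0..K}" using fsurj a by simp
  then obtain i where i: "i \<le> K" "f i = a" by auto
  show ?thesis
  proof (cases "ct i")
    case None
    have "VV a = V i"
    proof
      show "V i \<subseteq> VV a" using i unfolding VV_def by blast
      show "VV a \<subseteq> V i"
      proof
        fix x assume "x \<in> VV a"
        then obtain i' where i': "i' \<le> K" "f i' = a" "x \<in> V i'" unfolding VV_def by blast
        have "i' = i"
        proof (rule ccontr)
          assume "i' \<noteq> i"
          then consider "i < i'" | "i' < i" by linarith
          then show False
          proof cases
            case 1 then show False using run_ct[of i i'] i i' None by auto
          next
            case 2 then show False using run_ct[of i' i] i i' None by auto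
          qed
        qed
        then show "x \<in> V i" using i' by simp
      qed
    qed
    then show ?thesis using fnone[OF i(1) None] i None by auto
  next
    case (Some t)
    show ?thesis
    proof (cases t)
      case TK1
      then show ?thesis using fsome[OF i(1)] i Some unfolding Let_def U_eq by auto
    next
      case TS1
      then show ?thesis using fsome[OF i(1)] i Some unfolding Let_def U_eq by auto
    qed
  qed
qed

lemma verts_G': "a \<le> l \<Longrightarrow> verts (G' a) = VV a"
proof -
  assume a: "a \<le> l"
  obtain i where "(G' a = Gs i \<and> VV a = V i) \<or> G' a = complete_graph (VV a) \<or> G' a = edgeless_graph (VV a)"
    using comp_cases[OF a] by blast
  then show ?thesis
  proof (elim disjE conjE)
    assume "G' a = complete_graph (VV a)"
    then show ?thesis by (simp add: complete_graph_def verts_def)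
  next
    assume "G' a = edgeless_graph (VV a)"
    then show ?thesis by (simp add: edgeless_graph_def verts_def)
  qed simp
qed

lemma VV_sub: "VV a \<subseteq> T K"
proof
  fix x assume "x \<in> VV a"
  then obtain i where "i \<le> K" "x \<in> V i" unfolding VV_def by blast
  then show "x \<in> T K" using V_sub_T[of i K] by blast
qed

lemma VV_cover: "x \<in> T K \<Longrightarrow> \<exists>a\<le>l. x \<in> VV a"
proof -
  assume "x \<in> T K"
  then obtain i where i: "i \<le> K" "x \<in> V i" using in_T by blast
  have "i \<in> {0..K}" using i by simp
  then have "f i \<in> f ` {0..K}" by (rule imageI)
  then have "f i \<le> l" using fsurj by simp
  moreover have "x \<in> VV (f i)" using i unfolding VV_def by blast
  ultimately show ?thesis by blast
qed

lemma VV_disj: "x \<in> VV a \<Longrightarrow> x \<in> VV b \<Longrightarrow> a = b"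
proof -
  assume "x \<in> VV a" "x \<in> VV b"
  then obtain i j where "i \<le> K" "f i = a" "x \<in> V i" "j \<le> K" "f j = b" "x \<in> V j"
    unfolding VV_def by blast
  then show "a = b" using idx_unique[of x i j] by simp
qed

lemma VV_idx: "x \<in> VV a \<Longrightarrow> x \<in> V p \<Longrightarrow> p \<le> K \<Longrightarrow> f p = a"
proof -
  assume "x \<in> VV a" "x \<in> V p" "p \<le> K"
  then obtain i where "i \<le> K" "f i = a" "x \<in> V i" unfolding VV_def by blast
  then show "f p = a" using idx_unique[of x i p] \<open>x \<in> V p\<close> \<open>p \<le> K\<close> by simp
qed

lemma adj_in:
  assumes a: "a \<le> l" and u: "u \<in> VV a" and v: "v \<in> VV a"
  shows "adj (G' a) u v = adj GG u v"
proof -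
  obtain p q where p: "p \<le> K" "f p = a" "u \<in> V p" and q: "q \<le> K" "f q = a" "v \<in> V q"
    using u v unfolding VV_def by blast
  obtain i where i: "i \<le> K" "f i = a" and
    cs: "(ct i = None \<and> G' a = Gs i \<and> VV a = V i \<and> (1 \<le> a \<longrightarrow> A' a = As i)) \<or>
     (ct i = Some TK1 \<and> G' a = complete_graph (VV a) \<and> (1 \<le> a \<longrightarrow> A' a = VV a)) \<or>
     (ct i = Some TS1 \<and> G' a = edgeless_graph (VV a) \<and> (1 \<le> a \<longrightarrow> A' a = {}))"
    using comp_cases[OF a] by blast
  have cp: "ct p = ct i" "ct q = ct i" using run_same[of p i] run_same[of q i] p q i by simp_all
  have irr: "\<not> adj GG u u" using irrefl_GG[of u] u VV_sub[of a] by blast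
  from cs show ?thesis
  proof (elim disjE conjE)
    assume "ct i = None" "G' a = Gs i" "VV a = V i"
    then show ?thesis using adj_GG_same[of u i v] u v i by simp
  next
    assume c: "ct i = Some TK1" "G' a = complete_graph (VV a)"
    have l: "adj (G' a) u v \<longleftrightarrow> u \<noteq> v"
      using u v unfolding c(2) adj_complete by blast
    have fp: "card (V p) = 1 \<and> (1 \<le> p \<longrightarrow> As p = V p)" using ct_TK1[OF p(1)] cp c by simp
    have fq: "card (V q) = 1 \<and> (1 \<le> q \<longrightarrow> As q = V q)" using ct_TK1[OF q(1)] cp c by simp
    consider "p = q" | "q < p" | "p < q" by linarith
    then show ?thesis
    proof cases
      case 1
      obtain x where "V p = {x}" using fp card_1_singletonE by blast
      then have "u = v" using 1 p q by auto
      then show ?thesis using l irr by simp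
    next
      case 2
      then have "u \<noteq> v" using idx_unique[of u p q] p q by auto
      moreover have "adj GG u v" using adj_GG[OF p(3) q(3) p(1) q(1)] 2 fp p by auto
      ultimately show ?thesis using l by simp
    next
      case 3
      then have "u \<noteq> v" using idx_unique[of u p q] p q by auto
      moreover have "adj GG u v" using adj_GG[OF p(3) q(3) p(1) q(1)] 3 fq q by auto
      ultimately show ?thesis using l by simp
    qed
  next
    assume c: "ct i = Some TS1" "G' a = edgeless_graph (VV a)"
    have l: "\<not> adj (G' a) u v"
      unfolding c(2) by (rule adj_edgeless)
    have fp: "card (V p) = 1 \<and> (1 \<le> p \<longrightarrow> As p = {})" using ct_TS1[OF p(1)] cp c by simp
    have fq: "card (V q) = 1 \<and> (1 \<le> q \<longrightarrow> As q = {})" using ct_TS1[OF q(1)] cp c by simp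
    consider "p = q" | "q < p" | "p < q" by linarith
    then show ?thesis
    proof cases
      case 1
      obtain x where "V p = {x}" using fp card_1_singletonE by blast
      then have "u = v" using 1 p q by auto
      then show ?thesis using l irr by simp
    next
      case 2
      have "\<not> adj GG u v" using adj_GG[OF p(3) q(3) p(1) q(1)] 2 fp p by auto
      then show ?thesis using l by simp
    next
      case 3
      have "\<not> adj GG u v" using adj_GG[OF p(3) q(3) p(1) q(1)] 3 fq q by auto
      then show ?thesis using l by simp
    qed
  qed
qed

lemma adj_cross:
  assumes a: "a \<le> l" and ba: "b < a" and u: "u \<in> VV a" and v: "v \<in> VV b"
  shows "adj GG u v = (u \<in> A' a)"
proof -
  obtain p q where p: "p \<le> K" "f p = a" "u \<in> V p" and q: "q \<le> K" "f q = b" "v \<in> V q"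
    using u v unfolding VV_def by blast
  have qp: "q < p"
  proof (rule ccontr)
    assume "\<not> q < p"
    then have "f p \<le> f q" using fle[of p q] q by simp
    then show False using p q ba by simp
  qed
  have adj: "adj GG u v = (u \<in> As p)" using adj_GG[OF p(3) q(3) p(1) q(1)] qp by auto
  have a1: "1 \<le> a" using ba by simp
  have p1: "1 \<le> p" using qp by simp
  obtain i where i: "i \<le> K" "f i = a" and
    cs: "(ct i = None \<and> G' a = Gs i \<and> VV a = V i \<and> (1 \<le> a \<longrightarrow> A' a = As i)) \<or>
     (ct i = Some TK1 \<and> G' a = complete_graph (VV a) \<and> (1 \<le> a \<longrightarrow> A' a = VV a)) \<or>
     (ct i = Some TS1 \<and> G' a = edgeless_graph (VV a) \<and> (1 \<le> a \<longrightarrow> A' a = {}))"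
    using comp_cases[OF a] by blast
  have cp: "ct p = ct i" using run_same[of p i] p i by simp
  from cs show ?thesis
  proof (elim disjE conjE)
    assume c: "ct i = None" "G' a = Gs i" "VV a = V i" "1 \<le> a \<longrightarrow> A' a = As i"
    then have "p = i" using idx_unique[of u p i] u p i by auto
    then show ?thesis using adj c a1 by simp
  next
    assume c: "ct i = Some TK1" "1 \<le> a \<longrightarrow> A' a = VV a"
    have "As p = V p" using ct_TK1[OF p(1)] cp c p1 by simp
    then show ?thesis using adj c a1 u p by simp
  next
    assume c: "ct i = Some TS1" "1 \<le> a \<longrightarrow> A' a = {}"
    have "As p = {}" using ct_TS1[OF p(1)] cp c p1 by simp
    then show ?thesis using adj c a1 by simp
  qed
qed

lemma A'_pres:
  assumes a: "a \<le> l" "1 \<le> a" and s: "\<sigma> \<in> Aut (G' a)" and u: "u \<in> VV a"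
  shows "\<sigma> u \<in> A' a \<longleftrightarrow> u \<in> A' a"
proof -
  obtain i where i: "i \<le> K" "f i = a" and
    cs: "(ct i = None \<and> G' a = Gs i \<and> VV a = V i \<and> (1 \<le> a \<longrightarrow> A' a = As i)) \<or>
     (ct i = Some TK1 \<and> G' a = complete_graph (VV a) \<and> (1 \<le> a \<longrightarrow> A' a = VV a)) \<or>
     (ct i = Some TS1 \<and> G' a = edgeless_graph (VV a) \<and> (1 \<le> a \<longrightarrow> A' a = {}))"
    using comp_cases[OF a(1)] by blast
  have bij: "bij_betw \<sigma> (VV a) (VV a)" using s verts_G'[OF a(1)] unfolding Aut_def by simp
  have su: "\<sigma> u \<in> VV a" using bij u bij_betwE by blast
  from cs show ?thesis
  proof (elim disjE conjE)
    assume c: "ct i = None" "G' a = Gs i" "VV a = V i" "1 \<le> a \<longrightarrow> A' a = As i"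
    have i1: "1 \<le> i"
    proof (rule ccontr)
      assume "\<not> 1 \<le> i"
      then have "i = 0" by simp
      then show False using i a f0 by simp
    qed
    have cd: "card (V i) \<noteq> 1"
    proof
      assume c1: "card (V i) = 1"
      have "ct i = (if card (V i) = 1 then Some (if As i = V i then TK1 else TS1) else None)"
        by (rule ct_pos[OF i1 i(1)])
      also have "\<dots> = Some (if As i = V i then TK1 else TS1)" using c1 by (rule if_P)
      finally show False using c(1) by simp
    qed
    have sA: "\<sigma> ` As i = As i"
      using KS_aut[OF gr[OF i(1)] indec[OF i(1)] cd ks[OF i1 i(1)]] s c(2) by simp
    have inj: "inj_on \<sigma> (V i)" using bij c(3) unfolding bij_betw_def by simp
    have AV: "As i \<subseteq> V i" using As_sub i1 i by simp
    have "\<sigma> u \<in> As i \<longleftrightarrow> u \<in> As i"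
    proof
      assume "\<sigma> u \<in> As i"
      then have "\<sigma> u \<in> \<sigma> ` As i" using sA by simp
      then obtain w where w: "w \<in> As i" "\<sigma> u = \<sigma> w" by blast
      have "w \<in> V i" "u \<in> V i" using w AV u c(3) by auto
      then have "u = w" using inj_onD[OF inj w(2)] by simp
      then show "u \<in> As i" using w by simp
    next
      assume "u \<in> As i"
      then show "\<sigma> u \<in> As i" using sA by blast
    qed
    then show ?thesis using c a by simp
  next
    assume c: "1 \<le> a \<longrightarrow> A' a = VV a"
    then show ?thesis using u su a by simp
  next
    assume c: "1 \<le> a \<longrightarrow> A' a = {}"
    then show ?thesis using a by simp
  qed
qed

lemma aut_VV:
  assumes p: "\<pi> \<in> Aut GG" and a: "a \<le> l"
  shows "\<pi> ` VV a = VV a"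
proof -
  have bij: "bij_betw \<pi> (T K) (T K)" using p verts_GG unfolding Aut_def by simp
  show ?thesis
  proof
    show "\<pi> ` VV a \<subseteq> VV a"
    proof
      fix y assume "y \<in> \<pi> ` VV a"
      then obtain x where x: "x \<in> VV a" "y = \<pi> x" by blast
      obtain i where i: "i \<le> K" "f i = a" "x \<in> V i" using x unfolding VV_def by blast
      have "\<pi> x \<in> T K" using bij x VV_sub bij_betwE by blast
      then obtain i' where i': "i' \<le> K" "\<pi> x \<in> V i'" using in_T by blast
      have "f i = f i'" using aut_f[OF p i(3) i(1) i'(2) i'(1)] .
      then show "y \<in> VV a" using i i' x unfolding VV_def by auto
    qed
    show "VV a \<subseteq> \<pi> ` VV a"
    proof
      fix y assume y: "y \<in> VV a"
      obtain i where i: "i \<le> K" "f i = a" "y \<in> V i" using y unfolding VV_def by blast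
      have "y \<in> \<pi> ` T K" using bij y VV_sub bij_betw_imp_surj_on by blast
      then obtain x where x: "x \<in> T K" "y = \<pi> x" by blast
      then obtain i' where i': "i' \<le> K" "x \<in> V i'" using in_T by blast
      have "f i' = f i" using aut_f[OF p i'(2) i'(1)] x i by simp
      then have "x \<in> VV a" using i i' unfolding VV_def by auto
      then show "y \<in> \<pi> ` VV a" using x by blast
    qed
  qed
qed

end



lemma carrier_Aut_group[simp]: "carrier (Aut_group G) = Aut G"
  by (simp add: Aut_group_def)
lemma mult_Aut_group[simp]: "x \<otimes>\<^bsub>Aut_group G\<^esub> y = x \<circ> y"
  by (simp add: Aut_group_def)

context ccomp begin

lemma part1: "\<pi> \<in> Aut GG \<Longrightarrow> a \<le> l \<Longrightarrow> \<pi> ` verts (G' a) = verts (G' a)"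
  using aut_VV verts_G' by simp

lemma restr_aut:
  assumes p: "\<pi> \<in> Aut GG" and a: "a \<le> l"
  shows "perm_restrict \<pi> (verts (G' a)) \<in> Aut (G' a)"
proof -
  let ?W = "VV a"
  have W: "verts (G' a) = ?W" using verts_G'[OF a] .
  have im: "\<pi> ` ?W = ?W" using aut_VV[OF p a] .
  have inj: "inj_on \<pi> (T K)" and pa: "\<forall>u\<in>T K. \<forall>v\<in>T K. adj GG u v \<longleftrightarrow> adj GG (\<pi> u) (\<pi> v)"
    using p verts_GG unfolding Aut_def bij_betw_def by auto
  have injW: "inj_on \<pi> ?W" using inj_on_subset[OF inj VV_sub] .
  have eq: "\<And>x. x \<in> ?W \<Longrightarrow> perm_restrict \<pi> ?W x = \<pi> x" by (simp add: perm_restrict_def)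
  have bij: "bij_betw (perm_restrict \<pi> ?W) ?W ?W"
    using bij_betw_cong[of ?W "perm_restrict \<pi> ?W" \<pi> ?W] eq injW im unfolding bij_betw_def by simp
  show ?thesis
    unfolding Aut_def W mem_Collect_eq
  proof (intro conjI allI impI ballI)
    show "bij_betw (perm_restrict \<pi> ?W) ?W ?W" by (rule bij)
    fix x assume "x \<notin> ?W" then show "perm_restrict \<pi> ?W x = x" by (simp add: perm_restrict_def)
  next
    fix u v assume u: "u \<in> ?W" and v: "v \<in> ?W"
    have pu: "\<pi> u \<in> ?W" "\<pi> v \<in> ?W" using im u v by auto
    have "adj (G' a) u v = adj GG u v" using adj_in[OF a u v] .
    also have "\<dots> = adj GG (\<pi> u) (\<pi> v)" using pa u v VV_sub by blast
    also have "\<dots> = adj (G' a) (\<pi> u) (\<pi> v)" using adj_in[OF a pu] by simp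
    finally show "adj (G' a) u v = adj (G' a) (perm_restrict \<pi> ?W u) (perm_restrict \<pi> ?W v)"
      using eq u v by simp
  qed
qed

definition "cid x = (THE a. a \<le> l \<and> x \<in> VV a)"

lemma cid: "a \<le> l \<Longrightarrow> x \<in> VV a \<Longrightarrow> cid x = a"
  unfolding cid_def using VV_disj by blast

lemma combine:
  assumes ps: "\<forall>a\<le>l. \<pi>s a \<in> Aut (G' a)"
  shows "\<exists>\<pi>\<in>Aut GG. \<forall>a\<le>l. \<forall>x\<in>verts (G' a). \<pi> x = \<pi>s a x"
proof -
  define \<pi> where "\<pi> x = (if x \<in> T K then \<pi>s (cid x) x else x)" for x
  have pe: "\<pi> x = \<pi>s a x" if "a \<le> l" "x \<in> VV a" for a x
    using that cid VV_sub unfolding \<pi>_def by auto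
  have bija: "bij_betw (\<pi>s a) (VV a) (VV a)" if "a \<le> l" for a
    using ps that verts_G' unfolding Aut_def by auto
  have adja: "\<forall>u\<in>VV a. \<forall>v\<in>VV a. adj (G' a) u v \<longleftrightarrow> adj (G' a) (\<pi>s a u) (\<pi>s a v)" if "a \<le> l" for a
    using ps that verts_G' unfolding Aut_def by auto
  have pin: "\<pi> x \<in> VV a" if "a \<le> l" "x \<in> VV a" for a x
    using pe[OF that] bija[OF that(1)] that(2) bij_betwE by fastforce
  have "\<pi> \<in> Aut GG"
    unfolding Aut_def verts_GG mem_Collect_eq
  proof (intro conjI allI impI ballI)
    show "bij_betw \<pi> (T K) (T K)"
      unfolding bij_betw_def
    proof
      show "inj_on \<pi> (T K)"
      proof (rule inj_onI)
        fix x y assume x: "x \<in> T K" and y: "y \<in> T K" and e: "\<pi> x = \<pi> y"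
        obtain a b where a: "a \<le> l" "x \<in> VV a" and b: "b \<le> l" "y \<in> VV b" using VV_cover x y by blast
        have "\<pi> x \<in> VV a" "\<pi> y \<in> VV b" using pin a b by auto
        then have ab: "a = b" using e VV_disj by simp
        have "\<pi>s a x = \<pi>s a y" using e pe a b ab by simp
        then show "x = y" using bija[OF a(1)] a b ab unfolding bij_betw_def inj_on_def by blast
      qed
      show "\<pi> ` T K = T K"
      proof
        show "\<pi> ` T K \<subseteq> T K"
        proof
          fix y assume "y \<in> \<pi> ` T K"
          then obtain x where x: "x \<in> T K" "y = \<pi> x" by blast
          obtain a where a: "a \<le> l" "x \<in> VV a" using VV_cover x by blast
          show "y \<in> T K" using pin[OF a] x VV_sub by blast
        qed
        show "T K \<subseteq> \<pi> ` T K"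
        proof
          fix y assume y: "y \<in> T K"
          obtain a where a: "a \<le> l" "y \<in> VV a" using VV_cover y by blast
          then obtain x where x: "x \<in> VV a" "y = \<pi>s a x"
            using bija[OF a(1)] unfolding bij_betw_def by blast
          have "\<pi> x = y" using pe[OF a(1) x(1)] x by simp
          then show "y \<in> \<pi> ` T K" using x VV_sub by blast
        qed
      qed
    qed
  next
    fix x assume "x \<notin> T K" then show "\<pi> x = x" unfolding \<pi>_def by simp
  next
    fix u v assume u: "u \<in> T K" and v: "v \<in> T K"
    obtain a where a: "a \<le> l" "u \<in> VV a" using VV_cover u by blast
    obtain b where b: "b \<le> l" "v \<in> VV b" using VV_cover v by blast
    have pu: "\<pi> u \<in> VV a" and pv: "\<pi> v \<in> VV b" using pin a b by auto
    consider "a = b" | "b < a" | "a < b" by linarith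
    then show "adj GG u v \<longleftrightarrow> adj GG (\<pi> u) (\<pi> v)"
    proof cases
      case 1
      have "adj GG u v = adj (G' a) u v" using adj_in[OF a(1) a(2)] b 1 by simp
      also have "\<dots> = adj (G' a) (\<pi>s a u) (\<pi>s a v)" using adja[OF a(1)] a b 1 by simp
      also have "\<dots> = adj (G' a) (\<pi> u) (\<pi> v)" using pe a b 1 by simp
      also have "\<dots> = adj GG (\<pi> u) (\<pi> v)" using adj_in[OF a(1) pu] pv 1 by simp
      finally show ?thesis .
    next
      case 2
      have a1: "1 \<le> a" using 2 by simp
      have "adj GG u v = (u \<in> A' a)" using adj_cross[OF a(1) 2 a(2) b(2)] .
      also have "\<dots> = (\<pi>s a u \<in> A' a)" using A'_pres[OF a(1) a1 _ a(2)] ps a by simp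
      also have "\<dots> = (\<pi> u \<in> A' a)" using pe a by simp
      also have "\<dots> = adj GG (\<pi> u) (\<pi> v)" using adj_cross[OF a(1) 2 pu pv] by simp
      finally show ?thesis .
    next
      case 3
      have b1: "1 \<le> b" using 3 by simp
      have "adj GG u v = adj GG v u" by (rule adj_sym)
      also have "\<dots> = (v \<in> A' b)" using adj_cross[OF b(1) 3 b(2) a(2)] .
      also have "\<dots> = (\<pi>s b v \<in> A' b)" using A'_pres[OF b(1) b1 _ b(2)] ps b by simp
      also have "\<dots> = (\<pi> v \<in> A' b)" using pe b by simp
      also have "\<dots> = adj GG (\<pi> v) (\<pi> u)" using adj_cross[OF b(1) 3 pv pu] by simp
      also have "\<dots> = adj GG (\<pi> u) (\<pi> v)" by (rule adj_sym)
      finally show ?thesis .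
    qed
  qed
  moreover have "\<forall>a\<le>l. \<forall>x\<in>verts (G' a). \<pi> x = \<pi>s a x" using pe verts_G' by simp
  ultimately show ?thesis by blast
qed

end



context ccomp begin

lemma iso_part:
  "(\<lambda>\<pi>. \<lambda>i\<in>{0..l}. perm_restrict \<pi> (verts (G' i)))
     \<in> iso (Aut_group GG) (product_group {0..l} (\<lambda>i. Aut_group (G' i)))"
proof -
  let ?\<Phi> = "\<lambda>\<pi>. \<lambda>i\<in>{0..l}. perm_restrict \<pi> (verts (G' i))"
  have inc: "?\<Phi> \<pi> \<in> (\<Pi>\<^sub>E i\<in>{0..l}. Aut (G' i))" if "\<pi> \<in> Aut GG" for \<pi>
    using restr_aut[OF that] by auto
  have hom: "?\<Phi> \<in> hom (Aut_group GG) (product_group {0..l} (\<lambda>i. Aut_group (G' i)))"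
    unfolding hom_def
  proof (intro CollectI conjI ballI)
    show "?\<Phi> \<in> carrier (Aut_group GG) \<rightarrow> carrier (product_group {0..l} (\<lambda>i. Aut_group (G' i)))"
      using inc by auto
  next
    fix \<pi> \<sigma> assume p: "\<pi> \<in> carrier (Aut_group GG)" and s: "\<sigma> \<in> carrier (Aut_group GG)"
    have s': "\<sigma> ` verts (G' i) = verts (G' i)" if "i \<le> l" for i using part1[of \<sigma> i] s that by simp
    show "?\<Phi> (\<pi> \<otimes>\<^bsub>Aut_group GG\<^esub> \<sigma>) = ?\<Phi> \<pi> \<otimes>\<^bsub>product_group {0..l} (\<lambda>i. Aut_group (G' i))\<^esub> ?\<Phi> \<sigma>"
    proof (rule ext)
      fix i
      show "?\<Phi> (\<pi> \<otimes>\<^bsub>Aut_group GG\<^esub> \<sigma>) i = (?\<Phi> \<pi> \<otimes>\<^bsub>product_group {0..l} (\<lambda>i. Aut_group (G' i))\<^esub> ?\<Phi> \<sigma>) i"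
      proof (cases "i \<in> {0..l}")
        case True
        have "perm_restrict (\<pi> \<circ> \<sigma>) (verts (G' i)) = perm_restrict \<pi> (verts (G' i)) \<circ> perm_restrict \<sigma> (verts (G' i))"
        proof (rule ext)
          fix x
          show "perm_restrict (\<pi> \<circ> \<sigma>) (verts (G' i)) x = (perm_restrict \<pi> (verts (G' i)) \<circ> perm_restrict \<sigma> (verts (G' i))) x"
            using s'[of i] True unfolding perm_restrict_def by auto
        qed
        then show ?thesis using True by simp
      next
        case False then show ?thesis by simp
      qed
    qed
  qed
  have inj: "inj_on ?\<Phi> (Aut GG)"
  proof (rule inj_onI)
    fix \<pi> \<sigma> assume p: "\<pi> \<in> Aut GG" and s: "\<sigma> \<in> Aut GG" and e: "?\<Phi> \<pi> = ?\<Phi> \<sigma>"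
    show "\<pi> = \<sigma>"
    proof (rule ext)
      fix x
      show "\<pi> x = \<sigma> x"
      proof (cases "x \<in> T K")
        case False
        then show ?thesis using p s verts_GG unfolding Aut_def by simp
      next
        case True
        obtain a where a: "a \<le> l" "x \<in> VV a" using VV_cover True by blast
        have "?\<Phi> \<pi> a x = ?\<Phi> \<sigma> a x" using e by simp
        then show ?thesis using a verts_G' unfolding perm_restrict_def by simp
      qed
    qed
  qed
  have surj: "?\<Phi> ` Aut GG = (\<Pi>\<^sub>E i\<in>{0..l}. Aut (G' i))"
  proof
    show "?\<Phi> ` Aut GG \<subseteq> (\<Pi>\<^sub>E i\<in>{0..l}. Aut (G' i))"
    proof
      fix y assume "y \<in> ?\<Phi> ` Aut GG"
      then obtain \<pi> where "\<pi> \<in> Aut GG" "y = ?\<Phi> \<pi>" by blast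
      then show "y \<in> (\<Pi>\<^sub>E i\<in>{0..l}. Aut (G' i))" using inc by simp
    qed
    show "(\<Pi>\<^sub>E i\<in>{0..l}. Aut (G' i)) \<subseteq> ?\<Phi> ` Aut GG"
    proof
      fix \<psi> assume psi: "\<psi> \<in> (\<Pi>\<^sub>E i\<in>{0..l}. Aut (G' i))"
      then have "\<forall>a\<le>l. \<psi> a \<in> Aut (G' a)" by (simp add: PiE_iff)
      from combine[OF this] obtain \<pi> where p: "\<pi> \<in> Aut GG" and pe: "\<forall>a\<le>l. \<forall>x\<in>verts (G' a). \<pi> x = \<psi> a x" ..
      have "?\<Phi> \<pi> = \<psi>"
      proof (rule ext)
        fix i
        show "?\<Phi> \<pi> i = \<psi> i"
        proof (cases "i \<in> {0..l}")
          case True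
          have "\<psi> i \<in> Aut (G' i)" using psi True by (simp add: PiE_iff)
          then have fix_out: "\<forall>x. x \<notin> verts (G' i) \<longrightarrow> \<psi> i x = x" by (simp add: Aut_def)
          show ?thesis
          proof (rule ext)
            fix x
            show "?\<Phi> \<pi> i x = \<psi> i x"
            proof (cases "x \<in> verts (G' i)")
              case True2: True
              have "i \<le> l" using True by simp
              then have "\<pi> x = \<psi> i x" using pe True2 by blast
              then show ?thesis using True True2 by (simp add: perm_restrict_def)
            next
              case False
              then show ?thesis using True fix_out by (simp add: perm_restrict_def)
            qed
          qed
        next
          case False
          then show ?thesis using PiE_arb[OF psi False] by simp
        qed
      qed
      then show "\<psi> \<in> ?\<Phi> ` Aut GG" using p by blast
    qed
  qed
  show ?thesis
    unfolding iso_def using hom inj surj by (simp add: bij_betw_def)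
qed

end

lemma canon_cdec: "canonical_decomp G k Gs As Bs \<Longrightarrow> cdec k Gs As Bs"
  unfolding canonical_decomp_def cdec_def by auto

theorem mainTheorem6:
  fixes G :: "'a graph" and l :: nat
    and G' :: "nat \<Rightarrow> 'a graph" and A' B' :: "nat \<Rightarrow> 'a set"
  assumes "is_graph G"
    and "compact_canonical_decomp G l G' A' B'"
  shows "(\<forall>\<pi>\<in>Aut G. \<forall>i\<le>l. \<pi> ` verts (G' i) = verts (G' i))
     \<and> (\<lambda>\<pi>. \<lambda>i\<in>{0..l}. perm_restrict \<pi> (verts (G' i)))
           \<in> iso (Aut_group G) (product_group {0..l} (\<lambda>i. Aut_group (G' i)))
     \<and> (\<forall>\<pi>s. (\<forall>i\<le>l. \<pi>s i \<in> Aut (G' i)) \<longrightarrow>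
           (\<exists>\<pi>\<in>Aut G. \<forall>i\<le>l. \<forall>x\<in>verts (G' i). \<pi> x = \<pi>s i x))"
proof -
  obtain k Gs As Bs where cd: "canonical_decomp G k Gs As Bs" and co: "compact_of k Gs As Bs l G' A' B'"
    using assms(2) unfolding compact_canonical_decomp_def by blast
  have Geq: "G = compose k Gs As Bs" using cd unfolding canonical_decomp_def by simp
  obtain f where
    f0: "f 0 = 0" and fmono: "mono_on {0..k} f" and fsurj: "f ` {0..k} = {0..l}"
    and fstep: "\<forall>i<k. f i = f (Suc i) \<longleftrightarrow>
                 (comp_type k Gs As i \<noteq> None \<and> comp_type k Gs As i = comp_type k Gs As (Suc i))"
    and fnone: "\<forall>i\<le>k. comp_type k Gs As i = None \<longrightarrow>
            G' (f i) = Gs i \<and> (1 \<le> f i \<longrightarrow> A' (f i) = As i \<and> B' (f i) = Bs i)"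
    and fsome: "\<forall>i\<le>k. let U = \<Union>{verts (Gs i') | i'. i' \<le> k \<and> f i' = f i} in
            (comp_type k Gs As i = Some TK1 \<longrightarrow>
               G' (f i) = complete_graph U \<and> (1 \<le> f i \<longrightarrow> A' (f i) = U \<and> B' (f i) = {})) \<and>
            (comp_type k Gs As i = Some TS1 \<longrightarrow>
               G' (f i) = edgeless_graph U \<and> (1 \<le> f i \<longrightarrow> A' (f i) = {} \<and> B' (f i) = U))"
    using co unfolding compact_of_def by (elim conjE exE) (rule that)
  have ax: "ccomp_axioms k Gs As Bs l f G' A' B'"
  proof (rule ccomp_axioms.intro)
    show "f 0 = 0" by (rule f0)
    show "mono_on {0..k} f" by (rule fmono)
    show "f ` {0..k} = {0..l}" by (rule fsurj)
  next
    fix i :: nat assume "i < k"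
    then show "f i = f (Suc i) \<longleftrightarrow> (comp_type k Gs As i \<noteq> None \<and> comp_type k Gs As i = comp_type k Gs As (Suc i))"
      using fstep by blast
  next
    fix i :: nat assume "i \<le> k" "comp_type k Gs As i = None"
    then show "G' (f i) = Gs i \<and> (1 \<le> f i \<longrightarrow> A' (f i) = As i \<and> B' (f i) = Bs i)"
      using fnone by blast
  next
    fix i :: nat assume i: "i \<le> k"
    show "let U = \<Union>{verts (Gs i') | i'. i' \<le> k \<and> f i' = f i} in
            (comp_type k Gs As i = Some TK1 \<longrightarrow>
               G' (f i) = complete_graph U \<and> (1 \<le> f i \<longrightarrow> A' (f i) = U \<and> B' (f i) = {})) \<and>
            (comp_type k Gs As i = Some TS1 \<longrightarrow>
               G' (f i) = edgeless_graph U \<and> (1 \<le> f i \<longrightarrow> A' (f i) = {} \<and> B' (f i) = U))"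
      using fsome i by blast
  qed
  interpret cc: ccomp k Gs As Bs l f G' A' B'
    by (rule ccomp.intro[OF canon_cdec[OF cd] ax])
  show ?thesis
    unfolding Geq
  proof (intro conjI allI impI ballI)
    fix \<pi> i assume "\<pi> \<in> Aut (compose k Gs As Bs)" "i \<le> l"
    then show "\<pi> ` verts (G' i) = verts (G' i)" by (rule cc.part1)
  next
    show "(\<lambda>\<pi>. \<lambda>i\<in>{0..l}. perm_restrict \<pi> (verts (G' i)))
           \<in> iso (Aut_group (compose k Gs As Bs)) (product_group {0..l} (\<lambda>i. Aut_group (G' i)))"
      by (rule cc.iso_part)
  next
    fix \<pi>s :: "nat \<Rightarrow> 'a \<Rightarrow> 'a" assume "\<forall>i\<le>l. \<pi>s i \<in> Aut (G' i)"
    then show "\<exists>\<pi>\<in>Aut (compose k Gs As Bs). \<forall>i\<le>l. \<forall>x\<in>verts (G' i). \<pi> x = \<pi>s i x"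
      by (rule cc.combine)
  qed
qed



end
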